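(* Let $P$ be a non-invertible bounded normal operator in a Hilbert space $\mathcal H$, and suppose either there exists $\gamma\in(0,\pi/2)$ such that $\sigma(P)\subset\overline{\mathcal C_\gamma}$, or $\gamma=0$ and $P$ is non-negative self-adjoint. Then (a) for $q\in(-\mathcal C_{\pi-\gamma})\cup\mathcal D(0,1/\|P\|)$, $I-qP$ is invertible and $\|(I-qP)^{-1}\|=\max_{\lambda\in\sigma(P)}|1-q\lambda|^{-1}$; (b) for any $\gamma'\in(\gamma,\pi/2)$, $\|(I-qP)^{-1}\|\le 1/\sin(\gamma'-\gamma)$ for all $q\in-\mathcal C_{\pi-\gamma'}$; (c) for any $r\in(0,1)$ there exists $C(r)$ independent of $\gamma$ such that if $\sin\gamma\in(0,1-r)$, then $\|(I-qP)^{-1}\|\le C(r)/|1-q\|P\||$ for all $q\in\mathcal D(0,(1-\sin\gamma)/\|P\|)$; (d) if $P\ge0$ is self-adjoint, then $\|(I-qP)^{-1}\|\le 4/|1-q\|P\||$ for all $q\in\mathcal D(0,1/\|P\|)$.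
   Context: $\mathcal C_\gamma=\{\rho e^{i\varphi}:\rho>0,\ \varphi\in(-\gamma,\gamma)\}$ (for $\gamma=0$ its closure is understood as $[0,+\infty)$), $-\mathcal C_\gamma=\{-z:z\in\mathcal C_\gamma\}$, an overline denotes closure, $\sigma(P)$ is the spectrum of $P$, and $\mathcal D(0,r)$ is the open disc of radius $r$ centered at $0$. *)

theory Defs
  imports "HOL-Analysis.Analysis"
begin

class complex_vector_space = real_vector +
  fixes scaleC :: "complex \<Rightarrow> 'a \<Rightarrow> 'a" (infixr "*\<^sub>C" 75)
  assumes scaleC_add_right: "a *\<^sub>C (x + y) = a *\<^sub>C x + a *\<^sub>C y"
    and scaleC_add_left: "(a + b) *\<^sub>C x = a *\<^sub>C x + b *\<^sub>C x"
    and scaleC_scaleC: "a *\<^sub>C (b *\<^sub>C x) = (a * b) *\<^sub>C x"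
    and scaleC_one: "1 *\<^sub>C x = x"
    and scaleC_of_real: "complex_of_real r *\<^sub>C x = r *\<^sub>R x"

class complex_inner = complex_vector_space + real_normed_vector +
  fixes cinner :: "'a \<Rightarrow> 'a \<Rightarrow> complex"
  assumes cinner_commute: "cinner x y = cnj (cinner y x)"
    and cinner_add_left: "cinner (x + y) z = cinner x z + cinner y z"
    and cinner_scaleC_left: "cinner (a *\<^sub>C x) y = cnj a * cinner x y"
    and cinner_self_real: "Im (cinner x x) = 0"
    and cinner_self_nonneg: "0 \<le> Re (cinner x x)"
    and cinner_self_eq_zero: "cinner x x = 0 \<longleftrightarrow> x = 0"
    and norm_eq_sqrt_cinner: "norm x = sqrt (Re (cinner x x))"

class chilbert_space = complex_inner + complete_space

definition bounded_clinear :: "('a::complex_inner \<Rightarrow> 'b::complex_inner) \<Rightarrow> bool" where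
  "bounded_clinear f \<longleftrightarrow> bounded_linear f \<and> (\<forall>c x. f (c *\<^sub>C x) = c *\<^sub>C f x)"

definition is_adjoint :: "('a::complex_inner \<Rightarrow> 'a) \<Rightarrow> ('a \<Rightarrow> 'a) \<Rightarrow> bool" where
  "is_adjoint P Q \<longleftrightarrow> (\<forall>x y. cinner (P x) y = cinner x (Q y))"

definition normal_op :: "('a::complex_inner \<Rightarrow> 'a) \<Rightarrow> bool" where
  "normal_op P \<longleftrightarrow> bounded_clinear P \<and>
     (\<exists>Q. bounded_clinear Q \<and> is_adjoint P Q \<and> P \<circ> Q = Q \<circ> P)"

definition selfadjoint_op :: "('a::complex_inner \<Rightarrow> 'a) \<Rightarrow> bool" where
  "selfadjoint_op P \<longleftrightarrow> bounded_clinear P \<and> is_adjoint P P"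

definition nonneg_op :: "('a::complex_inner \<Rightarrow> 'a) \<Rightarrow> bool" where
  "nonneg_op P \<longleftrightarrow> (\<forall>x. Im (cinner (P x) x) = 0 \<and> 0 \<le> Re (cinner (P x) x))"

definition op_invertible :: "('a::complex_inner \<Rightarrow> 'a) \<Rightarrow> bool" where
  "op_invertible T \<longleftrightarrow> bounded_clinear T \<and>
     (\<exists>S. bounded_clinear S \<and> S \<circ> T = id \<and> T \<circ> S = id)"

definition op_spectrum :: "('a::complex_inner \<Rightarrow> 'a) \<Rightarrow> complex set" where
  "op_spectrum P = {\<mu>. \<not> op_invertible (\<lambda>x. \<mu> *\<^sub>C x - P x)}"

definition sector :: "real \<Rightarrow> complex set" where
  "sector \<gamma> = {z. \<exists>\<rho> \<phi>. \<rho> > 0 \<and> -\<gamma> < \<phi> \<and> \<phi> < \<gamma> \<and> z = complex_of_real \<rho> * cis \<phi>}"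

definition res_op :: "complex \<Rightarrow> ('a::complex_inner \<Rightarrow> 'a) \<Rightarrow> ('a \<Rightarrow> 'a)" where
  "res_op q P = inv (\<lambda>x. x - q *\<^sub>C P x)"

definition thm_hyp :: "('a::complex_inner \<Rightarrow> 'a) \<Rightarrow> real \<Rightarrow> bool" where
  "thm_hyp P \<gamma> \<longleftrightarrow> normal_op P \<and> \<not> op_invertible P \<and>
     ((0 < \<gamma> \<and> \<gamma> < pi/2 \<and> op_spectrum P \<subseteq> closure (sector \<gamma>)) \<or>
      (\<gamma> = 0 \<and> selfadjoint_op P \<and> nonneg_op P))"

end

theory Submission
  imports Defs "HOL-Complex_Analysis.Complex_Analysis"
begin

subclass (in chilbert_space) banach ..

lemma scaleC_zero_left [simp]: "0 *\<^sub>C (x::'a::complex_vector_space) = 0"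
  using scaleC_of_real[of 0 x] by simp

lemma scaleC_zero_right [simp]: "a *\<^sub>C (0::'a::complex_vector_space) = 0"
proof -
  have "a *\<^sub>C (0::'a) = a *\<^sub>C 0 + a *\<^sub>C 0" using scaleC_add_right[of a 0 0] by simp
  then show ?thesis by simp
qed

lemma scaleC_neg1: "- (x::'a::complex_vector_space) = (-1) *\<^sub>C x"
  using scaleC_of_real[of "-1" x] by simp

lemma scaleC_minus_right: "a *\<^sub>C (- x) = - (a *\<^sub>C (x::'a::complex_vector_space))"
  by (simp only: scaleC_neg1[of x] scaleC_neg1[of "a *\<^sub>C x"] scaleC_scaleC mult.commute)

lemma scaleC_minus_left: "(- a) *\<^sub>C x = - (a *\<^sub>C (x::'a::complex_vector_space))"
  by (simp only: scaleC_neg1[of "a *\<^sub>C x"] scaleC_scaleC) simp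

lemma scaleC_diff_right: "a *\<^sub>C (x - y) = a *\<^sub>C x - a *\<^sub>C (y::'a::complex_vector_space)"
  by (simp only: diff_conv_add_uminus scaleC_add_right scaleC_minus_right)

lemma scaleC_diff_left: "(a - b) *\<^sub>C x = a *\<^sub>C x - b *\<^sub>C (x::'a::complex_vector_space)"
  by (simp only: diff_conv_add_uminus scaleC_add_left scaleC_minus_left)

lemma scaleC_one_simp [simp]: "1 *\<^sub>C (x::'a::complex_vector_space) = x"
  by (rule scaleC_one)

lemma scaleC_scaleC_simp [simp]: "a *\<^sub>C (b *\<^sub>C (x::'a::complex_vector_space)) = (a * b) *\<^sub>C x"
  by (rule scaleC_scaleC)

lemma cinner_zero_left [simp]: "cinner 0 (y::'a::complex_inner) = 0"
proof -
  have "cinner (0::'a) y = cinner 0 y + cinner 0 y" using cinner_add_left[of 0 0 y] by simp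
  then show ?thesis by simp
qed

lemma cinner_zero_right [simp]: "cinner (x::'a::complex_inner) 0 = 0"
proof -
  have "cinner x 0 = cnj (cinner 0 x)" by (rule cinner_commute)
  then show ?thesis by simp
qed

lemma cinner_add_right: "cinner (x::'a::complex_inner) (y + z) = cinner x y + cinner x z"
proof -
  have "cinner x (y + z) = cnj (cinner (y + z) x)" by (rule cinner_commute)
  also have "\<dots> = cnj (cinner y x) + cnj (cinner z x)" by (simp add: cinner_add_left)
  also have "\<dots> = cinner x y + cinner x z" by (simp add: cinner_commute[of x y] cinner_commute[of x z])
  finally show ?thesis .
qed

lemma cinner_scaleC_right: "cinner (x::'a::complex_inner) (a *\<^sub>C y) = a * cinner x y"
proof -
  have "cinner x (a *\<^sub>C y) = cnj (cinner (a *\<^sub>C y) x)" by (rule cinner_commute)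
  also have "\<dots> = a * cnj (cinner y x)" by (simp add: cinner_scaleC_left)
  also have "\<dots> = a * cinner x y" by (simp add: cinner_commute[of x y])
  finally show ?thesis .
qed

lemma cinner_minus_left: "cinner (- x) (y::'a::complex_inner) = - cinner x y"
proof -
  have "cinner (- x) y = cinner ((-1) *\<^sub>C x) y" by (simp only: scaleC_neg1[of x])
  also have "\<dots> = cnj (-1) * cinner x y" by (rule cinner_scaleC_left)
  finally show ?thesis by simp
qed

lemma cinner_minus_right: "cinner x (- y::'a::complex_inner) = - cinner x y"
proof -
  have "cinner x (- y) = cinner x ((-1) *\<^sub>C y)" by (simp only: scaleC_neg1[of y])
  also have "\<dots> = (-1) * cinner x y" by (rule cinner_scaleC_right)
  finally show ?thesis by simp
qed

lemma cinner_diff_left: "cinner (x - y) (z::'a::complex_inner) = cinner x z - cinner y z"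
  by (simp only: diff_conv_add_uminus cinner_add_left cinner_minus_left)

lemma cinner_diff_right: "cinner x (y - z::'a::complex_inner) = cinner x y - cinner x z"
  by (simp only: diff_conv_add_uminus cinner_add_right cinner_minus_right)

lemma cinner_self: "cinner x (x::'a::complex_inner) = complex_of_real ((norm x)\<^sup>2)"
proof -
  have "(norm x)\<^sup>2 = Re (cinner x x)" using norm_eq_sqrt_cinner[of x] cinner_self_nonneg[of x] by simp
  then show ?thesis using cinner_self_real[of x] by (simp add: complex_eq_iff)
qed

lemma norm_scaleC: "norm (a *\<^sub>C (x::'a::complex_inner)) = cmod a * norm x"
proof -
  have 1: "cinner (a *\<^sub>C x) (a *\<^sub>C x) = (cnj a * a) * cinner x x"
    by (simp add: cinner_scaleC_left cinner_scaleC_right mult.assoc)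
  have 2: "cnj a * a = complex_of_real ((cmod a)\<^sup>2)"
    by (metis complex_norm_square mult.commute)
  have "complex_of_real ((norm (a *\<^sub>C x))\<^sup>2) = complex_of_real ((cmod a)\<^sup>2 * (norm x)\<^sup>2)"
    using 1 unfolding 2 cinner_self by simp
  then have "(norm (a *\<^sub>C x))\<^sup>2 = ((cmod a) * norm x)\<^sup>2"
    by (simp only: of_real_eq_iff power_mult_distrib)
  then show ?thesis by (simp add: power2_eq_iff_nonneg)
qed

lemma Re_cinner_le: "Re (cinner x (y::'a::complex_inner)) \<le> norm x * norm y"
proof (cases "x = 0 \<or> y = 0")
  case True then show ?thesis by auto
next
  case False
  define a where "a = complex_of_real (norm y)"
  define b where "b = complex_of_real (norm x)"
  have "0 \<le> Re (cinner (a *\<^sub>C x - b *\<^sub>C y) (a *\<^sub>C x - b *\<^sub>C y))"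
    by (rule cinner_self_nonneg)
  also have "Re (cinner (a *\<^sub>C x - b *\<^sub>C y) (a *\<^sub>C x - b *\<^sub>C y))
     = norm y * norm y * Re (cinner x x) - norm y * norm x * Re (cinner x y)
        - norm x * norm y * Re (cinner y x) + norm x * norm x * Re (cinner y y)"
    by (simp add: a_def b_def cinner_diff_left cinner_diff_right cinner_scaleC_left cinner_scaleC_right algebra_simps)
  also have "Re (cinner y x) = Re (cinner x y)" using cinner_commute[of y x] by simp
  also have "Re (cinner x x) = norm x * norm x" by (simp add: cinner_self power2_eq_square)
  also have "Re (cinner y y) = norm y * norm y" by (simp add: cinner_self power2_eq_square)
  finally have "norm x * norm y * Re (cinner x y) \<le> norm x * norm y * (norm x * norm y)"
    by (simp add: algebra_simps)
  moreover have "norm x * norm y > 0" using False by simp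
  ultimately show ?thesis by (meson mult_le_cancel_left_pos)
qed

lemma cinner_Cauchy_Schwarz: "cmod (cinner x (y::'a::complex_inner)) \<le> norm x * norm y"
proof (cases "cinner x y = 0")
  case True then show ?thesis by simp
next
  case False
  define c where "c = cinner x y"
  define u where "u = cnj c / complex_of_real (cmod c)"
  have u: "cmod u = 1" using False by (simp add: u_def c_def norm_divide)
  have cc: "c * cnj c = complex_of_real (cmod c * cmod c)"
    by (metis complex_norm_square power2_eq_square of_real_mult)
  have "cinner x (u *\<^sub>C y) = u * c" by (simp add: cinner_scaleC_right c_def)
  also have "u * c = (c * cnj c) / complex_of_real (cmod c)" by (simp add: u_def mult.commute)
  also have "\<dots> = complex_of_real (cmod c)" using False unfolding cc by (simp add: c_def)
  finally have "cmod c = Re (cinner x (u *\<^sub>C y))" by simp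
  also have "\<dots> \<le> norm x * norm (u *\<^sub>C y)" by (rule Re_cinner_le)
  also have "\<dots> = norm x * norm y" by (simp add: norm_scaleC u)
  finally show ?thesis by (simp add: c_def)
qed


lemma scaleR_as_C: "r *\<^sub>R (x::'a::complex_vector_space) = complex_of_real r *\<^sub>C x"
  by (simp add: scaleC_of_real)

lemma bounded_linear_scaleC: "bounded_linear (\<lambda>x::'a::complex_inner. c *\<^sub>C x)"
proof (rule bounded_linear_intro[where K="cmod c"])
  show "c *\<^sub>C (x + y) = c *\<^sub>C x + c *\<^sub>C y" for x y :: 'a by (rule scaleC_add_right)
  show "c *\<^sub>C (r *\<^sub>R x) = r *\<^sub>R (c *\<^sub>C x)" for r and x :: 'a
    by (simp add: scaleR_as_C mult.commute)
  show "norm (c *\<^sub>C x) \<le> norm x * cmod c" for x :: 'a by (simp add: norm_scaleC mult.commute)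
qed

lemma bcl_bl: "bounded_clinear f \<Longrightarrow> bounded_linear f"
  by (simp add: bounded_clinear_def)

lemma bcl_scale: "bounded_clinear f \<Longrightarrow> f (c *\<^sub>C x) = c *\<^sub>C f x"
  by (simp add: bounded_clinear_def)

lemma bcl_add: "bounded_clinear f \<Longrightarrow> f (x + y) = f x + f y"
  using linear_add[OF bounded_linear.linear[OF bcl_bl]] by blast

lemma bcl_diff: "bounded_clinear f \<Longrightarrow> f (x - y) = f x - f y"
  using linear_diff[OF bounded_linear.linear[OF bcl_bl]] by blast

lemma bcl_zero: "bounded_clinear f \<Longrightarrow> f 0 = 0"
  using linear_0[OF bounded_linear.linear[OF bcl_bl]] by blast

lemma bcl_id: "bounded_clinear (\<lambda>x::'a::complex_inner. x)"
  by (simp add: bounded_clinear_def bounded_linear_ident)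

lemma bcl_id': "bounded_clinear (id::'a::complex_inner \<Rightarrow> 'a)"
  using bcl_id by (simp add: id_def)

lemma bcl_compose: "bounded_clinear f \<Longrightarrow> bounded_clinear g \<Longrightarrow> bounded_clinear (\<lambda>x. f (g x))"
  unfolding bounded_clinear_def using bounded_linear_compose by auto

lemma bcl_comp: "bounded_clinear f \<Longrightarrow> bounded_clinear g \<Longrightarrow> bounded_clinear (f \<circ> g)"
  using bcl_compose by (simp add: o_def)

lemma bcl_sub: "bounded_clinear f \<Longrightarrow> bounded_clinear g \<Longrightarrow> bounded_clinear (\<lambda>x. f x - g x)"
  unfolding bounded_clinear_def using bounded_linear_sub by (auto simp: scaleC_diff_right)

lemma bcl_add': "bounded_clinear f \<Longrightarrow> bounded_clinear g \<Longrightarrow> bounded_clinear (\<lambda>x. f x + g x)"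
  unfolding bounded_clinear_def using bounded_linear_add by (auto simp: scaleC_add_right)

lemma bcl_scaleC: "bounded_clinear f \<Longrightarrow> bounded_clinear (\<lambda>x. c *\<^sub>C f x)"
  unfolding bounded_clinear_def
  using bounded_linear_compose[OF bounded_linear_scaleC[of c]] by (auto simp: mult.commute)

lemma bcl_scaleC_id: "bounded_clinear (\<lambda>x::'a::complex_inner. c *\<^sub>C x)"
  using bcl_scaleC[OF bcl_id] .

lemma funpow_0_fun: "f ^^ 0 = (\<lambda>x. x)"
  by (rule ext) simp

lemma funpow_Suc_fun: "f ^^ Suc n = (\<lambda>x. f ((f ^^ n) x))"
  by (rule ext) simp

lemma bcl_funpow:
  fixes f :: "'a::complex_inner \<Rightarrow> 'a"
  assumes "bounded_clinear f" shows "bounded_clinear (f ^^ n)"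
proof (induction n)
  case 0 show ?case by (subst funpow_0_fun) (rule bcl_id)
next
  case (Suc n) show ?case unfolding funpow_Suc_fun by (rule bcl_compose[OF assms Suc.IH])
qed

lemma onorm_scaleC_le:
  assumes "bounded_linear f"
  shows "onorm (\<lambda>x. c *\<^sub>C f x) \<le> cmod c * onorm (f::'a::complex_inner \<Rightarrow> 'b::complex_inner)"
proof (rule onorm_bound)
  show "0 \<le> cmod c * onorm f" using onorm_pos_le[OF assms] by simp
  show "norm (c *\<^sub>C f x) \<le> cmod c * onorm f * norm x" for x
    using onorm[OF assms, of x] by (simp add: norm_scaleC mult.assoc mult_left_mono)
qed

lemma onorm_compose_le:
  "bounded_linear f \<Longrightarrow> bounded_linear g \<Longrightarrow> onorm (\<lambda>x. f (g x)) \<le> onorm f * onorm g"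
  using onorm_compose[of f g] by (simp add: o_def)

lemma onorm_funpow_le:
  assumes "bounded_clinear (f::'a::complex_inner \<Rightarrow> 'a)"
  shows "onorm (f ^^ n) \<le> onorm f ^ n"
proof (induction n)
  case 0
  then show ?case using onorm_id_le by (simp add: funpow_0_fun)
next
  case (Suc n)
  have "onorm (f ^^ Suc n) = onorm (\<lambda>x. f ((f ^^ n) x))" by (simp only: funpow_Suc_fun)
  also have "\<dots> \<le> onorm f * onorm (f ^^ n)"
    by (rule onorm_compose_le) (use assms bcl_funpow bcl_bl in auto)
  also have "\<dots> \<le> onorm f * onorm f ^ n"
    using Suc onorm_pos_le[OF bcl_bl[OF assms]] by (simp add: mult_left_mono)
  finally show ?case by (simp only: funpow_Suc_fun power_Suc)
qed

lemma norm_funpow_le: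
  assumes "bounded_clinear (f::'a::complex_inner \<Rightarrow> 'a)"
  shows "norm ((f ^^ n) x) \<le> onorm f ^ n * norm x"
proof -
  have "norm ((f ^^ n) x) \<le> onorm (f ^^ n) * norm x"
    by (rule onorm) (use assms bcl_funpow bcl_bl in auto)
  also have "\<dots> \<le> onorm f ^ n * norm x"
    using onorm_funpow_le[OF assms] by (simp add: mult_right_mono)
  finally show ?thesis .
qed

lemma funpow_bcl_scale:
  fixes f :: "'a::complex_inner \<Rightarrow> 'a"
  assumes "bounded_clinear f"
  shows "(f ^^ n) (c *\<^sub>C x) = c *\<^sub>C (f ^^ n) x"
  using bcl_scale[OF bcl_funpow[OF assms]] .

lemma funpow_bcl_diff:
  fixes f :: "'a::complex_inner \<Rightarrow> 'a"
  assumes "bounded_clinear f"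
  shows "(f ^^ n) (x - y) = (f ^^ n) x - (f ^^ n) y"
  using bcl_diff[OF bcl_funpow[OF assms]] .

lemma funpow_bcl_add:
  fixes f :: "'a::complex_inner \<Rightarrow> 'a"
  assumes "bounded_clinear f"
  shows "(f ^^ n) (x + y) = (f ^^ n) x + (f ^^ n) y"
  using bcl_add[OF bcl_funpow[OF assms]] .

section \<open>Neumann series\<close>

lemma neumann:
  fixes B :: "'a::chilbert_space \<Rightarrow> 'a"
  assumes B: "bounded_clinear B" and nB: "onorm B < 1"
  defines "N \<equiv> \<lambda>x. \<Sum>n. (B ^^ n) x"
  shows "\<And>x. (\<lambda>n. (B ^^ n) x) sums N x"
    and "bounded_clinear N"
    and "N \<circ> (\<lambda>x. x - B x) = id"
    and "(\<lambda>x. x - B x) \<circ> N = id"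
    and "onorm N \<le> 1 / (1 - onorm B)"
    and "\<And>x. norm (N x) \<le> norm x / (1 - onorm B)"
proof -
  define b where "b = onorm B"
  have b0: "0 \<le> b" using onorm_pos_le[OF bcl_bl[OF B]] by (simp add: b_def)
  have b1: "b < 1" using nB by (simp add: b_def)
  have geo: "summable (\<lambda>n. b ^ n * norm x)" for x :: 'a
    using summable_geometric[of b] b0 b1 by (intro summable_mult2) auto
  have nb: "norm ((B ^^ n) x) \<le> b ^ n * norm x" for n x
    using norm_funpow_le[OF B] by (simp add: b_def)
  have summ: "summable (\<lambda>n. (B ^^ n) x)" for x
    by (rule summable_comparison_test[OF _ geo[of x]]) (use nb in auto)
  have summn: "summable (\<lambda>n. norm ((B ^^ n) x))" for x
    by (rule summable_comparison_test[OF _ geo[of x]]) (use nb in auto)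
  show sums: "(\<lambda>n. (B ^^ n) x) sums N x" for x
    using summ[of x] by (simp add: N_def summable_sums)
  have geosum: "(\<Sum>n. b ^ n * norm x) = norm x / (1 - b)" for x :: 'a
    using suminf_geometric[of b] b0 b1 suminf_mult2[OF summable_geometric[of b], of "norm x"]
    by simp
  show normN: "norm (N x) \<le> norm x / (1 - onorm B)" for x
  proof -
    have "norm (N x) \<le> (\<Sum>n. norm ((B ^^ n) x))"
      unfolding N_def by (rule summable_norm[OF summn])
    also have "\<dots> \<le> (\<Sum>n. b ^ n * norm x)"
      by (rule suminf_le) (use nb summn geo in auto)
    also have "\<dots> = norm x / (1 - b)" by (rule geosum)
    finally show ?thesis by (simp add: b_def)
  qed
  have Nadd: "N (x + y) = N x + N y" for x y
  proof -
    have "(\<lambda>n. (B ^^ n) (x + y)) sums (N x + N y)"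
      using sums_add[OF sums[of x] sums[of y]] by (simp add: funpow_bcl_add[OF B])
    then show ?thesis using sums[of "x+y"] sums_unique2 by blast
  qed
  have NscC: "N (c *\<^sub>C x) = c *\<^sub>C N x" for c x
  proof -
    have "(\<lambda>n. c *\<^sub>C (B ^^ n) x) sums (c *\<^sub>C N x)"
      by (rule bounded_linear.sums[OF bounded_linear_scaleC sums])
    then have "(\<lambda>n. (B ^^ n) (c *\<^sub>C x)) sums (c *\<^sub>C N x)"
      by (simp add: funpow_bcl_scale[OF B])
    then show ?thesis using sums[of "c *\<^sub>C x"] sums_unique2 by blast
  qed
  have blN: "bounded_linear N"
  proof (rule bounded_linear_intro[where K="1 / (1 - b)"])
    show "N (x + y) = N x + N y" for x y by (rule Nadd)
    show "N (r *\<^sub>R x) = r *\<^sub>R N x" for r x by (simp add: scaleR_as_C NscC)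
    show "norm (N x) \<le> norm x * (1 / (1 - b))" for x using normN[of x] by (simp add: b_def)
  qed
  then show bclN: "bounded_clinear N" by (simp add: bounded_clinear_def NscC)
  show "onorm N \<le> 1 / (1 - onorm B)"
    by (rule onorm_bound) (use b1 normN in \<open>auto simp: b_def\<close>)
  have shift: "(\<lambda>n. (B ^^ Suc n) x) sums (N x - x)" for x
    using sums[of x] by (subst sums_Suc_iff) simp
  have BN: "B (N x) = N x - x" for x
  proof -
    have "(\<lambda>n. B ((B ^^ n) x)) sums B (N x)"
      by (rule bounded_linear.sums[OF bcl_bl[OF B] sums])
    then have "(\<lambda>n. (B ^^ Suc n) x) sums B (N x)" by simp
    then show ?thesis using shift[of x] sums_unique2 by blast
  qed
  have NB: "N (B x) = N x - x" for x
  proof -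
    have "(\<lambda>n. (B ^^ Suc n) x) sums N (B x)"
      using sums[of "B x"] by (simp add: funpow_swap1)
    then show ?thesis using shift[of x] sums_unique2 by blast
  qed
  show "N \<circ> (\<lambda>x. x - B x) = id"
    by (rule ext) (simp add: linear_diff[OF bounded_linear.linear[OF blN]] NB)
  show "(\<lambda>x. x - B x) \<circ> N = id"
    by (rule ext) (simp add: BN)
qed


definition inv_pair :: "('a::complex_inner \<Rightarrow> 'a) \<Rightarrow> ('a \<Rightarrow> 'a) \<Rightarrow> bool" where
  "inv_pair A R \<longleftrightarrow> bounded_clinear A \<and> bounded_clinear R \<and> R \<circ> A = id \<and> A \<circ> R = id"

lemma op_invertible_iff: "op_invertible A \<longleftrightarrow> (\<exists>R. inv_pair A R)"
  by (auto simp: op_invertible_def inv_pair_def)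

lemma inv_pairD:
  assumes "inv_pair A R"
  shows "bounded_clinear A" "bounded_clinear R" "\<And>x. R (A x) = x" "\<And>x. A (R x) = x"
  using assms by (auto simp: inv_pair_def fun_eq_iff)

lemma inv_pairI:
  assumes "bounded_clinear A" "bounded_clinear R" "\<And>x. R (A x) = x" "\<And>x. A (R x) = x"
  shows "inv_pair A R"
  using assms by (auto simp: inv_pair_def fun_eq_iff)

lemma inv_pair_inv: "inv_pair A R \<Longrightarrow> inv A = R"
  unfolding inv_pair_def by (auto intro: inv_unique_comp)

lemma inv_pair_id: "inv_pair (\<lambda>x. x) (\<lambda>x. x)"
  by (rule inv_pairI) (auto intro: bcl_id)

lemma inv_pair_scale:
  assumes "inv_pair A R" "c \<noteq> 0"
  shows "inv_pair (\<lambda>x. c *\<^sub>C A x) (\<lambda>x. R ((1/c) *\<^sub>C x))"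
proof (rule inv_pairI)
  note D = inv_pairD[OF assms(1)]
  show "bounded_clinear (\<lambda>x. c *\<^sub>C A x)" by (rule bcl_scaleC[OF D(1)])
  show "bounded_clinear (\<lambda>x. R ((1/c) *\<^sub>C x))" by (rule bcl_compose[OF D(2) bcl_scaleC_id])
  show "R ((1/c) *\<^sub>C (c *\<^sub>C A x)) = x" for x using assms(2) by (simp add: D(3))
  show "c *\<^sub>C A (R ((1/c) *\<^sub>C x)) = x" for x using assms(2) by (simp add: D(4))
qed

lemma op_invertible_scale:
  assumes "op_invertible A" "c \<noteq> 0"
  shows "op_invertible (\<lambda>x. c *\<^sub>C A x)"
  using assms inv_pair_scale unfolding op_invertible_iff by blast

lemma op_invertible_scale_iff:
  assumes "c \<noteq> 0"
  shows "op_invertible (\<lambda>x. c *\<^sub>C A x) \<longleftrightarrow> op_invertible A"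
proof
  assume "op_invertible (\<lambda>x. c *\<^sub>C A x)"
  from op_invertible_scale[OF this, of "1/c"] assms show "op_invertible A" by simp
qed (use op_invertible_scale assms in auto)

lemma inv_pair_scaleC_id:
  assumes "c \<noteq> 0"
  shows "inv_pair (\<lambda>x::'a::complex_inner. c *\<^sub>C x) (\<lambda>x. (1/c) *\<^sub>C x)"
  using inv_pair_scale[OF inv_pair_id assms] by simp

lemma onorm_scaleC_id_le: "onorm (\<lambda>x::'a::complex_inner. c *\<^sub>C x) \<le> cmod c"
  by (rule onorm_bound) (auto simp: norm_scaleC)

lemma inv_pair_bounded_below:
  assumes "inv_pair A R" "c > 0" "\<And>x. c * norm x \<le> norm (A x)"
  shows "onorm R \<le> 1 / c"
proof (rule onorm_bound)
  show "0 \<le> 1 / c" using assms(2) by simp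
  show "norm (R y) \<le> 1 / c * norm y" for y
    using assms(3)[of "R y"] inv_pairD(4)[OF assms(1)] assms(2) by (simp add: field_simps)
qed

lemma perturb:
  fixes A R E :: "'a::chilbert_space \<Rightarrow> 'a"
  assumes AR: "inv_pair A R" and E: "bounded_clinear E" and small: "onorm E * onorm R < 1"
  shows "\<exists>R'. inv_pair (\<lambda>x. A x - E x) R' \<and> onorm R' \<le> onorm R / (1 - onorm E * onorm R)
      \<and> (\<forall>y. (\<lambda>n. ((\<lambda>x. R (E x)) ^^ n) (R y)) sums R' y)"
proof -
  note D = inv_pairD[OF AR]
  define B where "B = (\<lambda>x. R (E x))"
  have B: "bounded_clinear B" unfolding B_def by (rule bcl_compose[OF D(2) E])
  have nB: "onorm B \<le> onorm E * onorm R"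
    unfolding B_def using onorm_compose_le[OF bcl_bl[OF D(2)] bcl_bl[OF E]] by (simp add: mult.commute)
  with small have nB1: "onorm B < 1" by simp
  define N where "N = (\<lambda>x. \<Sum>n. (B ^^ n) x)"
  note NN = neumann[OF B nB1, folded N_def]
  have N1: "N (x - B x) = x" for x using NN(3) by (simp add: fun_eq_iff)
  have N2: "N x - B (N x) = x" for x using NN(4) by (simp add: fun_eq_iff)
  define R' where "R' = (\<lambda>y. N (R y))"
  have "inv_pair (\<lambda>x. A x - E x) R'"
  proof (rule inv_pairI)
    show "bounded_clinear (\<lambda>x. A x - E x)" by (rule bcl_sub[OF D(1) E])
    show "bounded_clinear R'" unfolding R'_def by (rule bcl_compose[OF NN(2) D(2)])
    show "R' (A x - E x) = x" for x
      unfolding R'_def using N1[of x] by (simp add: bcl_diff[OF D(2)] D(3) B_def)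
    show "A (R' y) - E (R' y) = y" for y
    proof -
      define z where "z = R' y"
      have "z - B z = R y" using N2[of "R y"] by (simp add: z_def R'_def)
      then have "A (z - B z) = y" by (simp add: D(4))
      then show ?thesis by (simp add: bcl_diff[OF D(1)] B_def D(4) z_def)
    qed
  qed
  moreover have "onorm R' \<le> onorm R / (1 - onorm E * onorm R)"
  proof (rule onorm_bound)
    have "0 \<le> onorm R" by (rule onorm_pos_le[OF bcl_bl[OF D(2)]])
    then show "0 \<le> onorm R / (1 - onorm E * onorm R)" using small by simp
    show "norm (R' y) \<le> onorm R / (1 - onorm E * onorm R) * norm y" for y
    proof -
      have "norm (R' y) \<le> norm (R y) / (1 - onorm B)" unfolding R'_def N_def by (rule neumann(6)[OF B nB1])
      also have "\<dots> \<le> (onorm R * norm y) / (1 - onorm B)"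
        using onorm[OF bcl_bl[OF D(2)], of y] nB1 by (simp add: divide_right_mono)
      also have "\<dots> \<le> (onorm R * norm y) / (1 - onorm E * onorm R)"
        using nB small \<open>0 \<le> onorm R\<close> by (intro divide_left_mono) auto
      finally show ?thesis by simp
    qed
  qed
  moreover have "\<forall>y. (\<lambda>n. ((\<lambda>x. R (E x)) ^^ n) (R y)) sums R' y"
    using NN(1) by (simp add: R'_def B_def N_def)
  ultimately show ?thesis by blast
qed

lemma perturb_inv:
  fixes A R E :: "'a::chilbert_space \<Rightarrow> 'a"
  assumes "inv_pair A R" "bounded_clinear E" "onorm E * onorm R < 1"
  shows "op_invertible (\<lambda>x. A x - E x)"
  using perturb[OF assms] unfolding op_invertible_iff by blast

lemma funpow_scale_comp:
  fixes R :: "'a::complex_inner \<Rightarrow> 'a"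
  assumes "bounded_clinear R"
  shows "((\<lambda>x. R (h *\<^sub>C x)) ^^ n) z = h ^ n *\<^sub>C (R ^^ n) z"
proof (induction n)
  case 0 then show ?case by simp
next
  case (Suc n)
  have "((\<lambda>x. R (h *\<^sub>C x)) ^^ Suc n) z = R (h *\<^sub>C ((\<lambda>x. R (h *\<^sub>C x)) ^^ n) z)" by simp
  also have "\<dots> = R (h *\<^sub>C (h ^ n *\<^sub>C (R ^^ n) z))" by (simp only: Suc)
  also have "\<dots> = h ^ Suc n *\<^sub>C (R ^^ Suc n) z" by (simp add: bcl_scale[OF assms] mult.commute)
  finally show ?case .
qed

lemma resolvent_expansion:
  fixes T R0 :: "'a::chilbert_space \<Rightarrow> 'a"
  assumes T: "bounded_clinear T" and R0: "inv_pair (\<lambda>x. T x - l0 *\<^sub>C x) R0"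
    and small: "cmod h * onorm R0 < 1"
  shows "\<exists>R'. inv_pair (\<lambda>x. T x - (l0 + h) *\<^sub>C x) R' \<and> onorm R' \<le> onorm R0 / (1 - cmod h * onorm R0)
      \<and> (\<forall>y. (\<lambda>n. h ^ n *\<^sub>C (R0 ^^ Suc n) y) sums R' y)"
proof -
  note D = inv_pairD[OF R0]
  have n0: "0 \<le> onorm R0" by (rule onorm_pos_le[OF bcl_bl[OF D(2)]])
  have nE: "onorm (\<lambda>x::'a. h *\<^sub>C x) \<le> cmod h" by (rule onorm_scaleC_id_le)
  have sm: "onorm (\<lambda>x::'a. h *\<^sub>C x) * onorm R0 \<le> cmod h * onorm R0"
    using nE n0 by (simp add: mult_right_mono)
  with small have sm': "onorm (\<lambda>x::'a. h *\<^sub>C x) * onorm R0 < 1" by simp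
  obtain R' where R': "inv_pair (\<lambda>x. (T x - l0 *\<^sub>C x) - h *\<^sub>C x) R'"
    "onorm R' \<le> onorm R0 / (1 - onorm (\<lambda>x::'a. h *\<^sub>C x) * onorm R0)"
    "\<forall>y. (\<lambda>n. ((\<lambda>x. R0 (h *\<^sub>C x)) ^^ n) (R0 y)) sums R' y"
    using perturb[OF R0 bcl_scaleC_id sm'] by blast
  have eq: "(\<lambda>x. (T x - l0 *\<^sub>C x) - h *\<^sub>C x) = (\<lambda>x. T x - (l0 + h) *\<^sub>C x)"
    by (rule ext) (simp add: scaleC_add_left algebra_simps)
  have "onorm R0 / (1 - onorm (\<lambda>x::'a. h *\<^sub>C x) * onorm R0) \<le> onorm R0 / (1 - cmod h * onorm R0)"
    using sm small n0 by (intro divide_left_mono) auto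
  moreover have "((\<lambda>x. R0 (h *\<^sub>C x)) ^^ n) (R0 y) = h ^ n *\<^sub>C (R0 ^^ Suc n) y" for n y
    by (simp add: funpow_scale_comp[OF D(2)] funpow_swap1)
  ultimately show ?thesis using R' eq by auto
qed


section \<open>Normal operators: the norm of powers of the inverse\<close>

definition normal_pair :: "('a::complex_inner \<Rightarrow> 'a) \<Rightarrow> ('a \<Rightarrow> 'a) \<Rightarrow> bool" where
  "normal_pair T Q \<longleftrightarrow> bounded_clinear T \<and> bounded_clinear Q \<and> is_adjoint T Q \<and> T \<circ> Q = Q \<circ> T"

lemma normal_pair_norm_adj:
  assumes "normal_pair T Q"
  shows "norm (Q z) = norm (T z)"
proof -
  have adj: "\<And>x y. cinner (T x) y = cinner x (Q y)" and comm: "\<And>x. T (Q x) = Q (T x)"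
    using assms by (auto simp: normal_pair_def is_adjoint_def fun_eq_iff)
  have "(norm (Q z))\<^sup>2 = Re (cinner (Q z) (Q z))" by (simp add: cinner_self)
  also have "cinner (Q z) (Q z) = cinner (T (Q z)) z" by (simp add: adj)
  also have "\<dots> = cinner (Q (T z)) z" by (simp add: comm)
  also have "\<dots> = cnj (cinner z (Q (T z)))" by (rule cinner_commute)
  also have "cinner z (Q (T z)) = cinner (T z) (T z)" by (simp add: adj)
  finally have "(norm (Q z))\<^sup>2 = (norm (T z))\<^sup>2" by (simp add: cinner_self)
  then show ?thesis by (simp add: power2_eq_iff_nonneg)
qed

lemma normal_pair_ineq:
  assumes "normal_pair T Q"
  shows "(norm (T w))\<^sup>2 \<le> norm w * norm (T (T w))"
proof -
  have adj: "\<And>x y. cinner (T x) y = cinner x (Q y)"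
    using assms by (auto simp: normal_pair_def is_adjoint_def)
  have "(norm (T w))\<^sup>2 = Re (cinner (T w) (T w))" by (simp add: cinner_self)
  also have "\<dots> = Re (cinner w (Q (T w)))" by (simp add: adj)
  also have "\<dots> \<le> cmod (cinner w (Q (T w)))" by (rule complex_Re_le_cmod)
  also have "\<dots> \<le> norm w * norm (Q (T w))" by (rule cinner_Cauchy_Schwarz)
  also have "norm (Q (T w)) = norm (T (T w))" by (rule normal_pair_norm_adj[OF assms])
  finally show ?thesis .
qed

lemma normal_pair_square:
  assumes "normal_pair T Q"
  shows "normal_pair (T \<circ> T) (Q \<circ> Q)"
proof -
  have adj: "\<And>x y. cinner (T x) y = cinner x (Q y)" and comm: "\<And>x. T (Q x) = Q (T x)"
    using assms by (auto simp: normal_pair_def is_adjoint_def fun_eq_iff)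
  show ?thesis
    using assms unfolding normal_pair_def is_adjoint_def
    by (auto simp: bcl_comp adj comm fun_eq_iff)
qed

lemma inv_pair_square:
  assumes "inv_pair T S"
  shows "inv_pair (T \<circ> T) (S \<circ> S)"
  using inv_pairD[OF assms] by (intro inv_pairI) (auto simp: bcl_comp)

lemma onorm_inv_square:
  fixes T Q S :: "'a::complex_inner \<Rightarrow> 'a"
  assumes N: "normal_pair T Q" and I: "inv_pair T S"
  shows "(onorm S)\<^sup>2 \<le> onorm (S \<circ> S)"
proof -
  note D = inv_pairD[OF I]
  have bSS: "bounded_linear (S \<circ> S)" using bcl_comp[OF D(2) D(2)] by (rule bcl_bl)
  define c where "c = onorm (S \<circ> S)"
  have c0: "0 \<le> c" unfolding c_def by (rule onorm_pos_le[OF bSS])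
  have "norm (S y) \<le> sqrt c * norm y" for y
  proof -
    define w where "w = S (S y)"
    have Tw: "T w = S y" and TTw: "T (T w) = y" by (simp_all add: w_def D(4))
    have "(norm (S y))\<^sup>2 \<le> norm w * norm y" using normal_pair_ineq[OF N, of w] Tw TTw by simp
    also have "norm w \<le> c * norm y" using onorm[OF bSS, of y] by (simp add: w_def c_def)
    then have "norm w * norm y \<le> c * norm y * norm y" by (simp add: mult_right_mono)
    also have "c * norm y * norm y = (sqrt c * norm y)\<^sup>2"
      using c0 by (simp add: power_mult_distrib power2_eq_square[of "norm y"])
    finally have "(norm (S y))\<^sup>2 \<le> (sqrt c * norm y)\<^sup>2" .
    then show ?thesis by (rule power2_le_imp_le) (simp add: c0)
  qed
  then have le: "onorm S \<le> sqrt c"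
    by (intro onorm_bound) (use c0 in auto)
  have "(onorm S)\<^sup>2 \<le> (sqrt c)\<^sup>2"
    by (rule power_mono[OF le onorm_pos_le[OF bcl_bl[OF D(2)]]])
  then show ?thesis using c0 by (simp add: c_def)
qed

lemma onorm_inv_pow2:
  fixes S :: "'a::complex_inner \<Rightarrow> 'a"
  shows "\<And>T Q S. normal_pair T Q \<Longrightarrow> inv_pair T S \<Longrightarrow> onorm S ^ (2 ^ k) \<le> onorm (S ^^ (2 ^ k))"
proof (induction k)
  case 0
  then show ?case by simp
next
  case (Suc k)
  note IH = Suc.IH[OF normal_pair_square[OF Suc.prems(1)] inv_pair_square[OF Suc.prems(2)]]
  have SS: "S \<circ> S = S ^^ 2" by (rule ext) (simp add: numeral_2_eq_2)
  have "onorm S ^ (2 ^ Suc k) = ((onorm S)\<^sup>2) ^ (2 ^ k)" by (simp add: power_mult)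
  also have "\<dots> \<le> (onorm (S \<circ> S)) ^ (2 ^ k)"
    using onorm_inv_square[OF Suc.prems] onorm_pos_le[OF bcl_bl[OF inv_pairD(2)[OF Suc.prems(2)]]]
    by (intro power_mono) auto
  also have "\<dots> \<le> onorm ((S \<circ> S) ^^ (2 ^ k))" by (rule IH)
  also have "(S \<circ> S) ^^ (2 ^ k) = S ^^ (2 ^ Suc k)" by (simp only: SS funpow_mult power_Suc)
  finally show ?case .
qed


lemma bounded_linear_cinner_right: "bounded_linear (\<lambda>v::'a::complex_inner. cinner y v)"
proof (rule bounded_linear_intro[where K="norm y"])
  show "cinner y (a + b) = cinner y a + cinner y b" for a b :: 'a by (rule cinner_add_right)
  show "cinner y (r *\<^sub>R v) = r *\<^sub>R cinner y v" for r and v :: 'a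
    by (simp add: scaleR_as_C cinner_scaleC_right scaleR_conv_of_real)
  show "norm (cinner y v) \<le> norm v * norm y" for v :: 'a
    using cinner_Cauchy_Schwarz[of y v] by (simp add: mult.commute)
qed

lemma key_spectral:
  fixes T Q S :: "'a::chilbert_space \<Rightarrow> 'a"
  assumes N: "normal_pair T Q" and I: "inv_pair T S" and d: "d > 0"
    and res: "\<And>l. cmod l < d \<Longrightarrow> op_invertible (\<lambda>x. T x - l *\<^sub>C x)"
  shows "onorm S \<le> 1 / d"
proof (rule ccontr)
  assume "\<not> ?thesis"
  then have a_gt: "onorm S > 1 / d" by simp
  define a where "a = onorm S"
  have "0 < 1 / d" using d by simp
  then have a0: "a > 0" using a_gt unfolding a_def by linarith
  have ad: "1 / a < d" using a_gt d a0 unfolding a_def by (simp add: field_simps)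
  define \<rho> where "\<rho> = (1 / a + d) / 2"
  have \<rho>1: "1 / a < \<rho>" and \<rho>2: "\<rho> < d" and \<rho>0: "0 < \<rho>"
    using ad a0 unfolding \<rho>_def by (auto simp: field_simps)
  have T: "bounded_clinear T" using inv_pairD[OF I] by simp
  define R where "R = (\<lambda>l. inv (\<lambda>x. T x - l *\<^sub>C x))"
  have RI: "inv_pair (\<lambda>x. T x - l *\<^sub>C x) (R l)" if l: "cmod l < d" for l
  proof -
    obtain R' where "inv_pair (\<lambda>x. T x - l *\<^sub>C x) R'" using res[OF l] unfolding op_invertible_iff by blast
    moreover then have "R l = R'" unfolding R_def by (rule inv_pair_inv)
    ultimately show ?thesis by simp
  qed
  have Rnn: "0 \<le> onorm (R l)" if "cmod l < d" for l
    using onorm_pos_le[OF bcl_bl[OF inv_pairD(2)[OF RI[OF that]]]] .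
  have R0: "R 0 = S"
  proof -
    have "(\<lambda>x. T x - 0 *\<^sub>C x) = T" by (rule ext) simp
    then show ?thesis unfolding R_def using inv_pair_inv[OF I] by simp
  qed
  have expn: "(\<forall>y. (\<lambda>n. h ^ n *\<^sub>C (R l0 ^^ Suc n) y) sums R (l0 + h) y)
      \<and> onorm (R (l0 + h)) \<le> onorm (R l0) / (1 - cmod h * onorm (R l0))"
    if hyp: "cmod l0 < d" "cmod h * onorm (R l0) < 1" for l0 h
  proof -
    obtain R' where R': "inv_pair (\<lambda>x. T x - (l0 + h) *\<^sub>C x) R'"
      "onorm R' \<le> onorm (R l0) / (1 - cmod h * onorm (R l0))"
      "\<forall>y. (\<lambda>n. h ^ n *\<^sub>C (R l0 ^^ Suc n) y) sums R' y"
      using resolvent_expansion[OF T RI[OF hyp(1)] hyp(2)] by blast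
    have "R (l0 + h) = R'" unfolding R_def by (rule inv_pair_inv[OF R'(1)])
    then show ?thesis using R' by simp
  qed
  obtain Bd where Bd0: "0 \<le> Bd" and Bd: "\<And>l. cmod l = \<rho> \<Longrightarrow> onorm (R l) \<le> Bd"
  proof -
    define e where "e = (\<lambda>l0. 1 / (2 * onorm (R l0) + 1))"
    have sph: "cmod l0 < d" if "l0 \<in> sphere 0 \<rho>" for l0 using that \<rho>2 by simp
    have epos: "e l0 > 0" if "l0 \<in> sphere 0 \<rho>" for l0
      using Rnn[OF sph[OF that]] unfolding e_def by simp
    have cov: "sphere (0::complex) \<rho> \<subseteq> (\<Union>l0\<in>sphere 0 \<rho>. ball l0 (e l0))"
      using epos by force
    obtain C' where C': "C' \<subseteq> sphere 0 \<rho>" "finite C'" "sphere 0 \<rho> \<subseteq> (\<Union>l0\<in>C'. ball l0 (e l0))"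
      by (rule compactE_image[OF compact_sphere _ cov]) auto
    define B where "B = (\<Sum>l0\<in>C'. 2 * onorm (R l0))"
    have B0: "0 \<le> B" unfolding B_def using C'(1) Rnn sph by (intro sum_nonneg) auto
    have "onorm (R l) \<le> B" if l: "cmod l = \<rho>" for l
    proof -
      from l C'(3) obtain l0 where l0: "l0 \<in> C'" "l \<in> ball l0 (e l0)" by auto
      have l0s: "cmod l0 < d" using sph l0(1) C'(1) by auto
      define h where "h = l - l0"
      have ch: "cmod h < e l0" using l0(2) by (simp add: h_def dist_norm norm_minus_commute)
      have nn: "0 \<le> onorm (R l0)" by (rule Rnn[OF l0s])
      have "cmod h * onorm (R l0) \<le> e l0 * onorm (R l0)" using ch nn by (simp add: mult_right_mono)
      also have "e l0 * onorm (R l0) < 1 / 2" using nn unfolding e_def by (simp add: field_simps)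
      finally have sm: "cmod h * onorm (R l0) < 1 / 2" .
      have "onorm (R l) = onorm (R (l0 + h))" by (simp add: h_def)
      also have "\<dots> \<le> onorm (R l0) / (1 - cmod h * onorm (R l0))" using expn[OF l0s] sm by simp
      also have "\<dots> \<le> onorm (R l0) / (1 / 2)" using sm nn by (intro divide_left_mono) auto
      also have "\<dots> = 2 * onorm (R l0)" by simp
      also have "\<dots> \<le> B" unfolding B_def
        using l0(1) C' Rnn sph by (intro member_le_sum) auto
      finally show ?thesis .
    qed
    then show ?thesis using that B0 by blast
  qed
  \<comment> \<open>coefficient bounds via the Cauchy inequality\<close>
  have coef: "cmod (cinner y ((S ^^ Suc n) x)) \<le> norm y * Bd * norm x / \<rho> ^ n" for x y n
  proof -
    define g where "g = (\<lambda>l. cinner y (R l x))"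
    have gser: "(\<lambda>n. cinner y ((R l0 ^^ Suc n) x) * (w - l0) ^ n) sums g w"
      if "cmod l0 < d" "w \<in> ball l0 (1 / (onorm (R l0) + 1))" for l0 w
    proof -
      have nn: "0 \<le> onorm (R l0)" by (rule Rnn[OF that(1)])
      have "cmod (w - l0) < 1 / (onorm (R l0) + 1)" using that(2) by (simp add: dist_norm norm_minus_commute)
      then have "cmod (w - l0) * onorm (R l0) \<le> 1 / (onorm (R l0) + 1) * onorm (R l0)"
        by (rule mult_right_mono[OF less_imp_le nn])
      also have "\<dots> < 1" using nn by (simp add: field_simps)
      finally have sm: "cmod (w - l0) * onorm (R l0) < 1" .
      have "(\<lambda>n. (w - l0) ^ n *\<^sub>C (R l0 ^^ Suc n) x) sums R w x"
        using expn[OF that(1) sm] by simp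
      from bounded_linear.sums[OF bounded_linear_cinner_right this, of y]
      show ?thesis by (simp add: g_def cinner_scaleC_right mult.commute)
    qed
    have hol: "g holomorphic_on ball 0 d"
    proof -
      have "g holomorphic_on (\<Union>l0\<in>ball 0 d. ball l0 (1 / (onorm (R l0) + 1)))"
        by (rule holomorphic_on_UN_open) (auto intro!: power_series_holomorphic gser)
      moreover have "ball 0 d \<subseteq> (\<Union>l0\<in>ball 0 d. ball l0 (1 / (onorm (R l0) + 1)))"
      proof
        fix l assume "l \<in> ball (0::complex) d"
        moreover then have "0 \<le> onorm (R l)" using Rnn by simp
        ultimately show "l \<in> (\<Union>l0\<in>ball 0 d. ball l0 (1 / (onorm (R l0) + 1)))"
          by (intro UN_I[of l]) (auto simp: add_pos_nonneg)
      qed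
      ultimately show ?thesis by (rule holomorphic_on_subset)
    qed
    define c0 where "c0 = (\<lambda>n. cinner y ((S ^^ Suc n) x))"
    define r0 where "r0 = 1 / (a + 1)"
    have r0: "0 < r0" using a0 by (simp add: r0_def)
    have ser0: "(\<lambda>n. c0 n * w ^ n) sums g w" if "w \<in> ball 0 r0" for w
      using gser[of 0 w] that d by (simp add: R0 c0_def r0_def a_def)
    have fps: "g has_fps_expansion Abs_fps c0"
      unfolding has_fps_expansion_def
    proof
      have "summable (\<lambda>n. c0 n * (complex_of_real (r0 / 2)) ^ n)"
        using ser0[of "complex_of_real (r0 / 2)"] r0 by (auto simp: sums_iff)
      then have "conv_radius c0 \<ge> norm (complex_of_real (r0 / 2))" by (rule conv_radius_geI)
      moreover have "norm (complex_of_real (r0 / 2)) > 0" using r0 by simp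
      moreover have "fps_nth (Abs_fps c0) = c0" by (simp add: fun_eq_iff)
      ultimately show "0 < fps_conv_radius (Abs_fps c0)"
        unfolding fps_conv_radius_def by (metis ereal_less(2) order_less_le_trans zero_ereal_def)
      show "\<forall>\<^sub>F z in nhds 0. eval_fps (Abs_fps c0) z = g z"
        unfolding eventually_nhds
      proof (intro exI conjI ballI)
        show "open (ball (0::complex) r0)" by simp
        show "(0::complex) \<in> ball 0 r0" using r0 by simp
        fix w assume "w \<in> ball (0::complex) r0"
        from ser0[OF this] show "eval_fps (Abs_fps c0) w = g w"
          by (simp add: eval_fps_def sums_iff)
      qed
    qed
    have cn: "c0 n = (deriv ^^ n) g 0 / fact n"
      using fps_nth_fps_expansion[OF fps, of n] by simp
    have "norm ((deriv ^^ n) g 0) \<le> fact n * (norm y * Bd * norm x) / \<rho> ^ n"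
    proof (rule Cauchy_inequality)
      show "g holomorphic_on ball 0 \<rho>" by (rule holomorphic_on_subset[OF hol]) (use \<rho>2 in auto)
      show "continuous_on (cball 0 \<rho>) g"
        by (rule continuous_on_subset[OF holomorphic_on_imp_continuous_on[OF hol]]) (use \<rho>2 in auto)
      show "0 < \<rho>" by (rule \<rho>0)
      fix l :: complex assume "norm (0 - l) = \<rho>"
      then have l: "cmod l = \<rho>" by simp
      have bl: "bounded_linear (R l)" using RI[of l] l \<rho>2 by (auto dest: inv_pairD intro: bcl_bl)
      have "norm (g l) \<le> norm y * norm (R l x)" unfolding g_def by (rule cinner_Cauchy_Schwarz)
      also have "norm (R l x) \<le> onorm (R l) * norm x" by (rule onorm[OF bl])
      also have "\<dots> \<le> Bd * norm x" using Bd[OF l] by (simp add: mult_right_mono)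
      finally show "norm (g l) \<le> norm y * Bd * norm x" by (simp add: mult_left_mono mult.assoc)
    qed
    then have "cmod (c0 n) \<le> norm y * Bd * norm x / \<rho> ^ n"
      unfolding cn by (simp add: norm_divide field_simps)
    then show ?thesis by (simp add: c0_def)
  qed
  have powb: "onorm (S ^^ Suc n) \<le> Bd / \<rho> ^ n" for n
  proof (rule onorm_bound)
    show "0 \<le> Bd / \<rho> ^ n" using Bd0 \<rho>0 by simp
    fix x
    define y where "y = (S ^^ Suc n) x"
    have "(norm y)\<^sup>2 = cmod (cinner y y)" by (simp add: cinner_self norm_power)
    also have "\<dots> \<le> norm y * Bd * norm x / \<rho> ^ n" using coef[of y n x] by (simp add: y_def)
    finally have "norm y * norm y \<le> norm y * (Bd / \<rho> ^ n * norm x)"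
      by (simp add: power2_eq_square field_simps)
    then have yy: "norm y * norm y \<le> norm y * (Bd / \<rho> ^ n * norm x)" .
    have "norm y \<le> Bd / \<rho> ^ n * norm x"
    proof (cases "y = 0")
      case True then show ?thesis using Bd0 \<rho>0 by simp
    next
      case False then have "norm y > 0" by simp
      with yy show ?thesis by (meson mult_le_cancel_left_pos)
    qed
    then show "norm ((S ^^ Suc n) x) \<le> Bd / \<rho> ^ n * norm x" by (simp add: y_def)
  qed
  \<comment> \<open>contradiction with the growth of the powers\<close>
  define t where "t = a * \<rho>"
  have t1: "t > 1" using \<rho>1 a0 unfolding t_def by (simp add: field_simps)
  have grow: "t ^ (2 ^ k) \<le> Bd * \<rho>" for k
  proof -
    have "a ^ (2 ^ k) \<le> onorm (S ^^ (2 ^ k))"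
      unfolding a_def by (rule onorm_inv_pow2[OF N I])
    also have "S ^^ (2 ^ k) = S ^^ Suc (2 ^ k - 1)" by simp
    also have "onorm \<dots> \<le> Bd / \<rho> ^ (2 ^ k - 1)" by (rule powb)
    finally have le: "a ^ (2 ^ k) \<le> Bd / \<rho> ^ (2 ^ k - 1)" .
    have "a ^ (2 ^ k) * \<rho> ^ (2 ^ k) \<le> Bd / \<rho> ^ (2 ^ k - 1) * \<rho> ^ (2 ^ k)"
      by (rule mult_right_mono[OF le]) (use \<rho>0 in simp)
    also have e: "\<rho> ^ (2 ^ k) = \<rho> ^ (2 ^ k - 1) * \<rho>"
      by (metis One_nat_def Suc_pred pos2 power_Suc2 zero_less_power)
    also have "Bd / \<rho> ^ (2 ^ k - 1) * (\<rho> ^ (2 ^ k - 1) * \<rho>) = Bd * \<rho>"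
      using \<rho>0 by (simp add: field_simps)
    finally show ?thesis using e by (simp add: t_def power_mult_distrib)
  qed
  obtain k :: nat where k: "Bd * \<rho> / (t - 1) < real k" using reals_Archimedean2 by blast
  have "1 + real (2 ^ k) * (t - 1) \<le> (1 + (t - 1)) ^ (2 ^ k)"
    by (rule Bernoulli_inequality) (use t1 in simp)
  then have "1 + real (2 ^ k) * (t - 1) \<le> t ^ (2 ^ k)" by simp
  also have "\<dots> \<le> Bd * \<rho>" by (rule grow)
  finally have A: "real (2 ^ k) * (t - 1) < Bd * \<rho>" by simp
  have "real k < real (2 ^ k)" by simp
  then have "real k * (t - 1) < real (2 ^ k) * (t - 1)" using t1 by simp
  moreover have "Bd * \<rho> < real k * (t - 1)" using k t1 by (simp add: field_simps)
  ultimately show False using A by simp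
qed


section \<open>Spectrum\<close>

lemma spec_step:
  fixes P R :: "'a::chilbert_space \<Rightarrow> 'a"
  assumes R: "inv_pair (\<lambda>x. l *\<^sub>C x - P x) R" and P: "bounded_clinear P"
    and sm: "cmod (l - l') * onorm R < 1"
  shows "op_invertible (\<lambda>x. l' *\<^sub>C x - P x)"
proof -
  have n0: "0 \<le> onorm R" using onorm_pos_le[OF bcl_bl[OF inv_pairD(2)[OF R]]] .
  have "onorm (\<lambda>x::'a. (l - l') *\<^sub>C x) * onorm R \<le> cmod (l - l') * onorm R"
    by (rule mult_right_mono[OF onorm_scaleC_id_le n0])
  with sm have "onorm (\<lambda>x::'a. (l - l') *\<^sub>C x) * onorm R < 1" by simp
  from perturb_inv[OF R bcl_scaleC_id this]
  have "op_invertible (\<lambda>x. (l *\<^sub>C x - P x) - (l - l') *\<^sub>C x)" .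
  moreover have "(\<lambda>x. (l *\<^sub>C x - P x) - (l - l') *\<^sub>C x) = (\<lambda>x. l' *\<^sub>C x - P x)"
    by (rule ext) (simp add: scaleC_diff_left algebra_simps)
  ultimately show ?thesis by simp
qed

lemma spec_bounded:
  fixes P :: "'a::chilbert_space \<Rightarrow> 'a"
  assumes P: "bounded_clinear P" and big: "onorm P < cmod l"
  shows "op_invertible (\<lambda>x. l *\<^sub>C x - P x)"
proof -
  have l0: "l \<noteq> 0" using big onorm_pos_le[OF bcl_bl[OF P]] by auto
  have I: "inv_pair (\<lambda>x::'a. l *\<^sub>C x) (\<lambda>x. (1/l) *\<^sub>C x)" by (rule inv_pair_scaleC_id[OF l0])
  have "onorm P * onorm (\<lambda>x::'a. (1/l) *\<^sub>C x) \<le> onorm P * cmod (1/l)"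
    by (rule mult_left_mono[OF onorm_scaleC_id_le onorm_pos_le[OF bcl_bl[OF P]]])
  also have "\<dots> < 1" using big l0 by (simp add: norm_divide field_simps)
  finally show ?thesis by (rule perturb_inv[OF I P])
qed

lemma spec_subset_cball:
  fixes P :: "'a::chilbert_space \<Rightarrow> 'a"
  assumes P: "bounded_clinear P"
  shows "op_spectrum P \<subseteq> cball 0 (onorm P)"
  using spec_bounded[OF P] by (force simp: op_spectrum_def)

lemma spec_closed:
  fixes P :: "'a::chilbert_space \<Rightarrow> 'a"
  assumes P: "bounded_clinear P"
  shows "closed (op_spectrum P)"
  unfolding closed_def
proof (rule openI)
  fix l assume "l \<in> - op_spectrum P"
  then obtain R where R: "inv_pair (\<lambda>x. l *\<^sub>C x - P x) R"
    by (auto simp: op_spectrum_def op_invertible_iff)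
  have n0: "0 \<le> onorm R" using onorm_pos_le[OF bcl_bl[OF inv_pairD(2)[OF R]]] .
  define e where "e = 1 / (onorm R + 1)"
  have "e > 0" using n0 by (simp add: e_def)
  moreover have "ball l e \<subseteq> - op_spectrum P"
  proof
    fix l' assume "l' \<in> ball l e"
    then have "cmod (l - l') < e" by (simp add: dist_norm)
    then have "cmod (l - l') * onorm R \<le> e * onorm R" using n0 by (simp add: mult_right_mono)
    also have "e * onorm R < 1" using n0 by (simp add: e_def field_simps)
    finally have "cmod (l - l') * onorm R < 1" .
    from spec_step[OF R P this] show "l' \<in> - op_spectrum P" by (simp add: op_spectrum_def)
  qed
  ultimately show "\<exists>e>0. ball l e \<subseteq> - op_spectrum P" by blast
qed

lemma spec_compact:
  fixes P :: "'a::chilbert_space \<Rightarrow> 'a"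
  assumes P: "bounded_clinear P"
  shows "compact (op_spectrum P)"
  using spec_closed[OF P] spec_subset_cball[OF P] bounded_cball bounded_subset
  by (auto simp: compact_eq_bounded_closed)

lemma zero_in_spec:
  fixes P :: "'a::chilbert_space \<Rightarrow> 'a"
  assumes "\<not> op_invertible P"
  shows "0 \<in> op_spectrum P"
proof -
  have "(\<lambda>x. 0 *\<^sub>C x - P x) = (\<lambda>x. (-1) *\<^sub>C P x)" by (rule ext) (simp add: scaleC_neg1)
  then show ?thesis using assms op_invertible_scale_iff[of "-1" P] by (simp add: op_spectrum_def)
qed

lemma nontrivial_space:
  fixes P :: "'a::chilbert_space \<Rightarrow> 'a"
  assumes "\<not> op_invertible P" "bounded_clinear P"
  shows "\<exists>x::'a. x \<noteq> 0"
proof (rule ccontr)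
  assume "\<not> ?thesis"
  then have all0: "\<And>x::'a. x = 0" by simp
  have "inv_pair P P" by (rule inv_pairI[OF assms(2) assms(2)]) (metis all0)+
  then show False using assms(1) unfolding op_invertible_iff by blast
qed

section \<open>Nonnegative selfadjoint operators\<close>

lemma nonneg_lower_bound:
  fixes P :: "'a::chilbert_space \<Rightarrow> 'a"
  assumes nn: "nonneg_op P" and P: "bounded_clinear P"
    and c: "c \<le> \<bar>Im l\<bar> \<or> c \<le> - Re l"
  shows "c * norm x \<le> norm (l *\<^sub>C x - P x)"
proof -
  define a where "a = cinner (P x) x"
  have aIm: "Im a = 0" and aRe: "0 \<le> Re a" using nn by (auto simp: nonneg_op_def a_def)
  define n where "n = (norm x)\<^sup>2"
  have n0: "0 \<le> n" by (simp add: n_def)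
  have ci: "cinner (l *\<^sub>C x - P x) x = cnj l * complex_of_real n - a"
    by (simp add: cinner_diff_left cinner_scaleC_left cinner_self a_def n_def)
  have "c * n \<le> cmod (cnj l * complex_of_real n - a)"
  proof -
    have "c * n \<le> \<bar>Im l\<bar> * n \<or> c * n \<le> - Re l * n"
      using c mult_right_mono[OF _ n0, of c "\<bar>Im l\<bar>"] mult_right_mono[OF _ n0, of c "- Re l"] by blast
    moreover have "\<bar>Im l\<bar> * n \<le> cmod (cnj l * complex_of_real n - a)"
      using abs_Im_le_cmod[of "cnj l * complex_of_real n - a"] aIm n0 by (simp add: abs_mult)
    moreover have "- Re l * n \<le> cmod (cnj l * complex_of_real n - a)"
    proof -
      have "- Re l * n \<le> - Re (cnj l * complex_of_real n - a)" using aRe by simp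
      also have "\<dots> \<le> cmod (cnj l * complex_of_real n - a)"
        using abs_Re_le_cmod[of "cnj l * complex_of_real n - a"] by linarith
      finally show ?thesis .
    qed
    ultimately show ?thesis by linarith
  qed
  also have "\<dots> \<le> norm (l *\<^sub>C x - P x) * norm x" using cinner_Cauchy_Schwarz[of "l *\<^sub>C x - P x" x] ci by simp
  finally have "c * norm x * norm x \<le> norm (l *\<^sub>C x - P x) * norm x" by (simp add: n_def power2_eq_square mult.assoc)
  then show ?thesis by (cases "x = 0") (auto simp: mult_le_cancel_right)
qed

lemma stepping:
  fixes P :: "'a::chilbert_space \<Rightarrow> 'a"
  assumes P: "bounded_clinear P" and c: "c > 0" and v: "cmod v = 1"
    and lb: "\<And>t x. 0 \<le> t \<Longrightarrow> c * norm x \<le> norm ((l + complex_of_real t * v) *\<^sub>C x - P x)"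
  shows "op_invertible (\<lambda>x. l *\<^sub>C x - P x)"
proof -
  define M where "M = onorm P + cmod l + 1"
  have M0: "0 \<le> M" using onorm_pos_le[OF bcl_bl[OF P]] by (simp add: M_def)
  define t where "t = (\<lambda>n::nat. max 0 (M - real n * (c / 2)))"
  have t0: "0 \<le> t n" for n by (simp add: t_def)
  have inv: "op_invertible (\<lambda>x. (l + complex_of_real (t n) * v) *\<^sub>C x - P x)" for n
  proof (induction n)
    case 0
    have "t 0 = M" using M0 by (simp add: t_def)
    have "cmod (l + complex_of_real M * v) \<ge> M - cmod l"
      using norm_triangle_ineq2[of "complex_of_real M * v" "- l"] v M0
      by (simp add: norm_mult add.commute)
    then have "onorm P < cmod (l + complex_of_real (t 0) * v)" using \<open>t 0 = M\<close> by (simp add: M_def)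
    then show ?case by (rule spec_bounded[OF P])
  next
    case (Suc n)
    then obtain R where R: "inv_pair (\<lambda>x. (l + complex_of_real (t n) * v) *\<^sub>C x - P x) R"
      unfolding op_invertible_iff by blast
    have nR: "onorm R \<le> 1 / c" by (rule inv_pair_bounded_below[OF R c lb[OF t0]])
    have dt: "\<bar>t n - t (Suc n)\<bar> \<le> c / 2" unfolding t_def using c by (auto simp: max_def field_simps)
    have "cmod ((l + complex_of_real (t n) * v) - (l + complex_of_real (t (Suc n)) * v)) = \<bar>t n - t (Suc n)\<bar>"
    proof -
      have "(l + complex_of_real (t n) * v) - (l + complex_of_real (t (Suc n)) * v)
          = complex_of_real (t n - t (Suc n)) * v" (is "_ = ?r") by (simp add: algebra_simps)
      moreover have "cmod ?r = \<bar>t n - t (Suc n)\<bar>" using v by (simp only: norm_mult norm_of_real) simp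
      ultimately show ?thesis by (simp only:)
    qed
    moreover have "\<bar>t n - t (Suc n)\<bar> * onorm R \<le> c / 2 * (1 / c)"
      using dt nR onorm_pos_le[OF bcl_bl[OF inv_pairD(2)[OF R]]] c by (intro mult_mono) auto
    moreover have "c / 2 * (1 / c) < 1" using c by simp
    ultimately have "cmod ((l + complex_of_real (t n) * v) - (l + complex_of_real (t (Suc n)) * v)) * onorm R < 1"
      by (metis order_le_less_trans)
    then show ?case by (rule spec_step[OF R P])
  qed
  obtain n :: nat where n: "2 * M / c < real n" using reals_Archimedean2 by blast
  have "t n = 0" using n c by (simp add: t_def field_simps max_def)
  then show ?thesis using inv[of n] by simp
qed

lemma nonneg_spec:
  fixes P :: "'a::chilbert_space \<Rightarrow> 'a"
  assumes nn: "nonneg_op P" and P: "bounded_clinear P"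
  shows "op_spectrum P \<subseteq> {l. Im l = 0 \<and> 0 \<le> Re l}"
proof
  fix l assume l: "l \<in> op_spectrum P"
  show "l \<in> {l. Im l = 0 \<and> 0 \<le> Re l}"
  proof (rule ccontr)
    assume "l \<notin> {l. Im l = 0 \<and> 0 \<le> Re l}"
    then consider "Im l \<noteq> 0" | "Im l = 0" "Re l < 0" by fastforce
    then have "op_invertible (\<lambda>x. l *\<^sub>C x - P x)"
    proof cases
      case 1
      define v where "v = \<i> * complex_of_real (sgn (Im l))"
      have v: "cmod v = 1" using 1 by (simp add: v_def norm_mult abs_sgn_eq)
      show ?thesis
      proof (rule stepping[OF P _ v])
        show "0 < \<bar>Im l\<bar>" using 1 by simp
        fix t :: real and x assume "0 \<le> t"
        then have "\<bar>Im l\<bar> \<le> \<bar>Im (l + complex_of_real t * v)\<bar>"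
          using 1 by (auto simp: v_def sgn_if)
        then show "\<bar>Im l\<bar> * norm x \<le> norm ((l + complex_of_real t * v) *\<^sub>C x - P x)"
          by (intro nonneg_lower_bound[OF nn P]) simp
      qed
    next
      case 2
      show ?thesis
      proof (rule stepping[OF P _ _, of "- Re l" "-1"])
        show "0 < - Re l" using 2 by simp
        show "cmod (-1) = 1" by simp
        fix t :: real and x assume "0 \<le> t"
        then have "- Re l \<le> - Re (l + complex_of_real t * (-1))" by simp
        then show "- Re l * norm x \<le> norm ((l + complex_of_real t * (-1)) *\<^sub>C x - P x)"
          by (intro nonneg_lower_bound[OF nn P]) simp
      qed
    qed
    then show False using l by (simp add: op_spectrum_def)
  qed
qed


section \<open>Elementary complex inequalities\<close>

lemma cl0:
  assumes d: "0 < \<delta>" "\<delta> \<le> pi/2" and th: "\<bar>\<theta>\<bar> \<le> pi - \<delta>" and t: "0 \<le> t"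
  shows "sin \<delta> \<le> cmod (1 + complex_of_real t * cis \<theta>)"
proof -
  define z where "z = 1 + complex_of_real t * cis \<theta>"
  have Rz: "Re z = 1 + t * cos \<theta>" and Iz: "Im z = t * sin \<theta>" by (simp_all add: z_def)
  have sq: "(cmod z)\<^sup>2 = (t + cos \<theta>)\<^sup>2 + (sin \<theta>)\<^sup>2"
  proof -
    have "(cmod z)\<^sup>2 = (1 + t * cos \<theta>)\<^sup>2 + (t * sin \<theta>)\<^sup>2" by (simp add: cmod_power2 Rz Iz)
    also have "\<dots> = (t + cos \<theta>)\<^sup>2 + (sin \<theta>)\<^sup>2"
    proof -
      have c2: "(cos \<theta>)\<^sup>2 = 1 - (sin \<theta>)\<^sup>2" by (rule cos_squared_eq)
      show ?thesis by (simp add: c2 power_mult_distrib power2_sum algebra_simps)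
    qed
    finally show ?thesis .
  qed
  have sd1: "sin \<delta> \<le> 1" by simp
  show ?thesis
  proof (cases "0 \<le> cos \<theta>")
    case True
    have "1 \<le> Re z" using True t by (simp add: Rz)
    also have "Re z \<le> cmod z" by (rule complex_Re_le_cmod)
    finally have "1 \<le> cmod z" .
    then show ?thesis using sd1 unfolding z_def by linarith
  next
    case False
    define u where "u = \<bar>\<theta>\<bar>"
    have cu: "cos u = cos \<theta>" by (simp add: u_def)
    have su: "sin u = \<bar>sin \<theta>\<bar>"
    proof (cases "0 \<le> \<theta>")
      case True
      then have "0 \<le> sin \<theta>" using th d by (intro sin_ge_zero) auto
      then show ?thesis using True by (simp add: u_def)
    next
      case False
      then have "0 \<le> sin (-\<theta>)" using th d by (intro sin_ge_zero) auto
      then show ?thesis using False by (simp add: u_def)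
    qed
    have u1: "pi/2 < u"
    proof (rule ccontr)
      assume "\<not> pi/2 < u"
      then have "0 \<le> cos u" by (intro cos_ge_zero) (auto simp: u_def)
      then show False using False cu by simp
    qed
    have u2: "u \<le> pi - \<delta>" using th by (simp add: u_def)
    have "sin \<delta> \<le> sin (pi - u)"
      using d u1 u2 by (subst sin_mono_le_eq) auto
    also have "\<dots> = \<bar>sin \<theta>\<bar>" by (simp add: su)
    also have "\<bar>sin \<theta>\<bar> \<le> cmod z"
    proof -
      have "(sin \<theta>)\<^sup>2 \<le> (cmod z)\<^sup>2" using sq by simp
      then show ?thesis by (metis abs_ge_zero norm_ge_zero power2_abs power2_le_imp_le)
    qed
    finally show ?thesis by (simp add: z_def)
  qed
qed

lemma sector_bound:
  assumes d: "0 < \<delta>" "\<delta> \<le> pi/2" and g: "0 \<le> \<gamma>" and r: "0 < r" and psi: "\<bar>\<psi>\<bar> + \<gamma> \<le> pi - \<delta>"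
    and mu: "\<mu> \<in> closure (sector \<gamma>) \<union> {\<mu>. Im \<mu> = 0 \<and> 0 \<le> Re \<mu>}"
  shows "sin \<delta> \<le> cmod (1 + complex_of_real r * cis \<psi> * \<mu>)"
proof -
  have key: "sin \<delta> \<le> cmod (1 + complex_of_real r * cis \<psi> * (complex_of_real \<rho> * cis \<phi>))"
    if "0 \<le> \<rho>" "\<bar>\<phi>\<bar> \<le> \<gamma>" for \<rho> \<phi>
  proof -
    have "complex_of_real r * cis \<psi> * (complex_of_real \<rho> * cis \<phi>) = complex_of_real (r * \<rho>) * (cis \<psi> * cis \<phi>)"
      by (simp add: mult_ac)
    also have "cis \<psi> * cis \<phi> = cis (\<psi> + \<phi>)" by (rule cis_mult)
    finally have e: "complex_of_real r * cis \<psi> * (complex_of_real \<rho> * cis \<phi>) = complex_of_real (r * \<rho>) * cis (\<psi> + \<phi>)" .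
    moreover have "sin \<delta> \<le> cmod (1 + complex_of_real (r * \<rho>) * cis (\<psi> + \<phi>))"
      by (rule cl0[OF d]) (use that psi r in auto)
    ultimately show ?thesis by (simp only: e)
  qed
  have cl: "closed {\<mu>. sin \<delta> \<le> cmod (1 + complex_of_real r * cis \<psi> * \<mu>)}"
    by (intro closed_Collect_le continuous_intros)
  have "sector \<gamma> \<subseteq> {\<mu>. sin \<delta> \<le> cmod (1 + complex_of_real r * cis \<psi> * \<mu>)}"
    unfolding sector_def using key by force
  then have "closure (sector \<gamma>) \<subseteq> {\<mu>. sin \<delta> \<le> cmod (1 + complex_of_real r * cis \<psi> * \<mu>)}"
    by (rule closure_minimal[OF _ cl])
  moreover have "sin \<delta> \<le> cmod (1 + complex_of_real r * cis \<psi> * \<mu>)" if "Im \<mu> = 0" "0 \<le> Re \<mu>"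
  proof -
    have "\<mu> = complex_of_real (Re \<mu>) * cis 0" using that by (simp add: complex_eq_iff)
    then show ?thesis using key[of "Re \<mu>" 0] that g by simp
  qed
  ultimately show ?thesis using mu by blast
qed

lemma sector_cone:
  assumes g: "0 \<le> \<gamma>" "\<gamma> \<le> pi"
    and mu: "\<mu> \<in> closure (sector \<gamma>) \<union> {\<mu>. Im \<mu> = 0 \<and> 0 \<le> Re \<mu>}"
  shows "cos \<gamma> * cmod \<mu> \<le> Re \<mu>"
proof -
  have cl: "closed {\<mu>. cos \<gamma> * cmod \<mu> \<le> Re \<mu>}"
    by (intro closed_Collect_le continuous_intros)
  have "sector \<gamma> \<subseteq> {\<mu>. cos \<gamma> * cmod \<mu> \<le> Re \<mu>}"
  proof
    fix z assume "z \<in> sector \<gamma>"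
    then obtain \<rho> \<phi> where z: "\<rho> > 0" "-\<gamma> < \<phi>" "\<phi> < \<gamma>" "z = complex_of_real \<rho> * cis \<phi>"
      by (auto simp: sector_def)
    have "cos \<gamma> \<le> cos \<bar>\<phi>\<bar>" using z g by (subst cos_mono_le_eq) auto
    then have "cos \<gamma> \<le> cos \<phi>" by simp
    then have "cos \<gamma> * \<rho> \<le> cos \<phi> * \<rho>" using z by (simp add: mult_right_mono)
    then show "z \<in> {\<mu>. cos \<gamma> * cmod \<mu> \<le> Re \<mu>}" using z by (simp add: norm_mult mult.commute)
  qed
  then have "closure (sector \<gamma>) \<subseteq> {\<mu>. cos \<gamma> * cmod \<mu> \<le> Re \<mu>}"
    by (rule closure_minimal[OF _ cl])
  moreover have "cos \<gamma> * cmod \<mu> \<le> Re \<mu>" if "Im \<mu> = 0" "0 \<le> Re \<mu>"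
  proof -
    have "cmod \<mu> = Re \<mu>" using that by (simp add: cmod_def)
    then show ?thesis using mult_right_mono[OF cos_le_one \<open>0 \<le> Re \<mu>\<close>, of \<gamma>] by simp
  qed
  ultimately show ?thesis using mu by blast
qed

lemma ineq_cd:
  assumes g: "0 \<le> \<gamma>" "\<gamma> \<le> pi/2" and cone: "cos \<gamma> * cmod \<nu> \<le> Re \<nu>" and nu1: "cmod \<nu> \<le> 1"
    and w: "cmod w < 1 - sin \<gamma>"
  shows "cmod (1 - w) \<le> 4 * cmod (1 - w * \<nu>)"
proof -
  define a where "a = cmod \<nu>"
  define L where "L = cmod (1 - w * \<nu>)"
  have sg0: "0 \<le> sin \<gamma>" using g by (intro sin_ge_zero) auto
  have cg0: "0 \<le> cos \<gamma>" using g by (intro cos_ge_zero) auto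
  have cg1: "cos \<gamma> \<le> 1" by simp
  have w1: "cmod w \<le> 1" using w sg0 by simp
  have a0: "0 \<le> a" and a1: "a \<le> 1" using nu1 by (auto simp: a_def)
  have Llow: "1 - cmod w * a \<le> L"
    using norm_triangle_ineq2[of 1 "w * \<nu>"] by (simp add: L_def a_def norm_mult)
  have L1: "1 - a \<le> L"
  proof -
    have "cmod w * a \<le> a" using w1 a0 by (simp add: mult_left_le_one_le)
    then show ?thesis using Llow by simp
  qed
  have L2: "sin \<gamma> \<le> L"
  proof -
    have "cmod w * a \<le> cmod w" using mult_left_le[OF a1 norm_ge_zero[of w]] .
    then show ?thesis using Llow w by simp
  qed
  have nu: "cmod (1 - \<nu>) \<le> 2 * sin \<gamma> + (1 - a)"
  proof (cases "\<nu> = 0")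
    case True then show ?thesis using sg0 by (simp add: a_def)
  next
    case False
    then have apos: "0 < a" by (simp add: a_def)
    define u where "u = \<nu> / complex_of_real a"
    have nu_eq: "\<nu> = complex_of_real a * u" using apos by (simp add: u_def)
    have u1: "cmod u = 1" using apos by (simp add: u_def norm_divide a_def)
    have Reu: "cos \<gamma> \<le> Re u" using cone apos by (simp add: u_def a_def field_simps)
    have "(cmod (1 - u))\<^sup>2 = (1 - Re u)\<^sup>2 + (Im u)\<^sup>2" by (simp add: cmod_power2)
    also have "\<dots> = 2 - 2 * Re u"
    proof -
      have "(Re u)\<^sup>2 + (Im u)\<^sup>2 = 1" using u1 by (metis cmod_power2 one_power2)
      then show ?thesis by (simp add: power2_eq_square algebra_simps)
    qed
    also have "\<dots> \<le> 2 - 2 * cos \<gamma>" using Reu by simp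
    also have "\<dots> \<le> 2 * (sin \<gamma>)\<^sup>2"
    proof -
      have "cos \<gamma> * cos \<gamma> \<le> cos \<gamma>" using cg0 cg1 by (simp add: mult_left_le_one_le)
      then show ?thesis using sin_cos_squared_add[of \<gamma>] by (simp add: power2_eq_square)
    qed
    also have "\<dots> \<le> (2 * sin \<gamma>)\<^sup>2" by (simp add: power2_eq_square)
    finally have "cmod (1 - u) \<le> 2 * sin \<gamma>"
      by (rule power2_le_imp_le) (use sg0 in simp)
    moreover have "cmod (u - \<nu>) = 1 - a"
    proof -
      have "u - \<nu> = complex_of_real (1 - a) * u" (is "_ = ?r") by (simp add: nu_eq algebra_simps)
      moreover have "cmod ?r = 1 - a" using u1 a1 by (simp only: norm_mult norm_of_real) simp
      ultimately show ?thesis by (simp only:)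
    qed
    moreover have "cmod (1 - \<nu>) \<le> cmod (1 - u) + cmod (u - \<nu>)"
      using norm_triangle_ineq[of "1 - u" "u - \<nu>"] by simp
    ultimately show ?thesis by linarith
  qed
  have "cmod (1 - w) \<le> cmod (1 - w * \<nu>) + cmod (w * (\<nu> - 1))"
    using norm_triangle_ineq[of "1 - w * \<nu>" "w * (\<nu> - 1)"] by (simp add: algebra_simps)
  also have "cmod (w * (\<nu> - 1)) \<le> cmod (1 - \<nu>)"
    using w1 by (simp add: norm_mult norm_minus_commute mult_left_le_one_le)
  finally show ?thesis using nu L1 L2 by (simp add: L_def)
qed


lemma normal_T:
  fixes P :: "'a::complex_inner \<Rightarrow> 'a"
  assumes "normal_op P"
  shows "\<exists>Q'. normal_pair (\<lambda>x. x - q *\<^sub>C P x) Q'"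
proof -
  obtain Q where P: "bounded_clinear P" and Q: "bounded_clinear Q" and adj: "is_adjoint P Q"
    and comm: "P \<circ> Q = Q \<circ> P"
    using assms by (auto simp: normal_op_def)
  have adj': "\<And>x y. cinner (P x) y = cinner x (Q y)" using adj by (simp add: is_adjoint_def)
  have comm': "\<And>x. P (Q x) = Q (P x)" using comm by (simp add: fun_eq_iff)
  define Q' where "Q' = (\<lambda>x. x - cnj q *\<^sub>C Q x)"
  have "normal_pair (\<lambda>x. x - q *\<^sub>C P x) Q'"
    unfolding normal_pair_def
  proof (intro conjI)
    show "bounded_clinear (\<lambda>x. x - q *\<^sub>C P x)" by (rule bcl_sub[OF bcl_id bcl_scaleC[OF P]])
    show "bounded_clinear Q'" unfolding Q'_def by (rule bcl_sub[OF bcl_id bcl_scaleC[OF Q]])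
    show "is_adjoint (\<lambda>x. x - q *\<^sub>C P x) Q'"
      unfolding is_adjoint_def Q'_def
      by (simp add: cinner_diff_left cinner_diff_right cinner_scaleC_left cinner_scaleC_right adj')
    show "(\<lambda>x. x - q *\<^sub>C P x) \<circ> Q' = Q' \<circ> (\<lambda>x. x - q *\<^sub>C P x)"
      unfolding Q'_def
      by (rule ext) (simp add: bcl_diff[OF P] bcl_diff[OF Q] bcl_scale[OF P] bcl_scale[OF Q]
          scaleC_diff_right comm' mult.commute algebra_simps)
  qed
  then show ?thesis by blast
qed

lemma T_shift:
  fixes P :: "'a::complex_vector_space \<Rightarrow> 'a"
  assumes "q \<noteq> 0"
  shows "(\<lambda>x. (x - q *\<^sub>C P x) - l *\<^sub>C x) = (\<lambda>x. q *\<^sub>C (((1 - l) / q) *\<^sub>C x - P x))"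
proof (rule ext)
  fix x
  have "q *\<^sub>C (((1 - l) / q) *\<^sub>C x - P x) = (q * ((1 - l) / q)) *\<^sub>C x - q *\<^sub>C P x"
    by (simp add: scaleC_diff_right)
  also have "q * ((1 - l) / q) = 1 - l" using assms by simp
  also have "(1 - l) *\<^sub>C x = x - l *\<^sub>C x" by (simp add: scaleC_diff_left)
  finally show "(x - q *\<^sub>C P x) - l *\<^sub>C x = q *\<^sub>C (((1 - l) / q) *\<^sub>C x - P x)"
    by (simp add: algebra_simps)
qed

lemma zero_not_invertible:
  assumes "\<exists>x::'a::complex_inner. x \<noteq> 0"
  shows "\<not> op_invertible (\<lambda>x::'a. 0)"
proof
  assume "op_invertible (\<lambda>x::'a. 0)"
  then obtain R where "inv_pair (\<lambda>x::'a. 0) R" unfolding op_invertible_iff by blast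
  then have "\<And>x::'a. R 0 = x" using inv_pairD(3) by metis
  then show False using assms by metis
qed

lemma part_a:
  fixes P :: "'a::chilbert_space \<Rightarrow> 'a"
  assumes nP: "normal_op P" and ninv: "\<not> op_invertible P"
    and Tinv: "op_invertible (\<lambda>x. x - q *\<^sub>C P x)"
  shows "\<exists>\<mu>0\<in>op_spectrum P. onorm (res_op q P) = 1 / cmod (1 - q * \<mu>0)
      \<and> (\<forall>\<mu>\<in>op_spectrum P. 1 / cmod (1 - q * \<mu>) \<le> onorm (res_op q P))
      \<and> 0 < cmod (1 - q * \<mu>0)"
proof -
  have P: "bounded_clinear P" using nP by (simp add: normal_op_def)
  define T where "T = (\<lambda>x. x - q *\<^sub>C P x)"
  obtain S where S: "inv_pair T S" using Tinv unfolding op_invertible_iff T_def by blast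
  have resS: "res_op q P = S" unfolding res_op_def using inv_pair_inv[OF S] by (simp add: T_def)
  obtain Q' where N: "normal_pair T Q'" using normal_T[OF nP] unfolding T_def by blast
  have nontriv: "\<exists>x::'a. x \<noteq> 0" by (rule nontrivial_space[OF ninv P])
  define K where "K = op_spectrum P"
  have Kc: "compact K" unfolding K_def by (rule spec_compact[OF P])
  have K0: "0 \<in> K" unfolding K_def by (rule zero_in_spec[OF ninv])
  define f where "f = (\<lambda>\<mu>. cmod (1 - q * \<mu>))"
  have "continuous_on K f" unfolding f_def by (intro continuous_intros)
  then obtain \<mu>0 where \<mu>0: "\<mu>0 \<in> K" "\<And>\<mu>. \<mu> \<in> K \<Longrightarrow> f \<mu>0 \<le> f \<mu>"
    using continuous_attains_inf[OF Kc] K0 by blast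
  have specD: "op_invertible (\<lambda>x. \<mu> *\<^sub>C x - P x) \<Longrightarrow> \<mu> \<notin> K" for \<mu>
    by (simp add: K_def op_spectrum_def)
  have fpos: "0 < f \<mu>" if "\<mu> \<in> K" for \<mu>
  proof (rule ccontr)
    assume "\<not> 0 < f \<mu>"
    then have e: "q * \<mu> = 1" by (simp add: f_def)
    then have q0: "q \<noteq> 0" by auto
    have "op_invertible (\<lambda>x. T x - 0 *\<^sub>C x)" using Tinv by (simp add: T_def)
    then have "op_invertible (\<lambda>x. q *\<^sub>C (((1 - 0) / q) *\<^sub>C x - P x))"
      using T_shift[OF q0, of P 0] by (simp add: T_def)
    then have "op_invertible (\<lambda>x. ((1 - 0) / q) *\<^sub>C x - P x)" using op_invertible_scale_iff[OF q0] by blast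
    moreover have "(1 - 0) / q = \<mu>" using e q0 by (simp add: field_simps)
    ultimately show False using specD that by simp
  qed
  have geq: "1 / f \<mu> \<le> onorm S" if mu: "\<mu> \<in> K" for \<mu>
  proof (rule ccontr)
    assume "\<not> 1 / f \<mu> \<le> onorm S"
    then have lt: "f \<mu> * onorm S < 1" using fpos[OF mu] by (simp add: field_simps)
    define l where "l = 1 - q * \<mu>"
    have "onorm (\<lambda>x::'a. l *\<^sub>C x) * onorm S \<le> cmod l * onorm S"
      by (rule mult_right_mono[OF onorm_scaleC_id_le onorm_pos_le[OF bcl_bl[OF inv_pairD(2)[OF S]]]])
    also have "\<dots> < 1" using lt by (simp add: l_def f_def)
    finally have inv: "op_invertible (\<lambda>x. T x - l *\<^sub>C x)" by (rule perturb_inv[OF S bcl_scaleC_id])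
    show False
    proof (cases "q = 0")
      case True
      then have "(\<lambda>x. T x - l *\<^sub>C x) = (\<lambda>x. 0)" by (simp add: T_def l_def)
      then show False using inv zero_not_invertible[OF nontriv] by simp
    next
      case False
      have "op_invertible (\<lambda>x. q *\<^sub>C (((1 - l) / q) *\<^sub>C x - P x))"
        using inv T_shift[OF False, of P l] by (simp add: T_def)
      then have "op_invertible (\<lambda>x. ((1 - l) / q) *\<^sub>C x - P x)" using op_invertible_scale_iff[OF False] by blast
      moreover have "(1 - l) / q = \<mu>" using False by (simp add: l_def)
      ultimately show False using specD mu by simp
    qed
  qed
  have leq: "onorm S \<le> 1 / f \<mu>0"
  proof (rule key_spectral[OF N S fpos[OF \<mu>0(1)]])
    fix l assume l: "cmod l < f \<mu>0"
    show "op_invertible (\<lambda>x. T x - l *\<^sub>C x)"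
    proof (cases "q = 0")
      case True
      then have "f \<mu>0 = 1" by (simp add: f_def)
      then have l1: "1 - l \<noteq> 0" using l by auto
      have "(\<lambda>x. T x - l *\<^sub>C x) = (\<lambda>x. (1 - l) *\<^sub>C x)" using True by (simp add: T_def scaleC_diff_left)
      then show ?thesis using inv_pair_scaleC_id[OF l1] unfolding op_invertible_iff by auto
    next
      case False
      define \<mu> where "\<mu> = (1 - l) / q"
      have "\<mu> \<notin> K"
      proof
        assume "\<mu> \<in> K"
        then have "f \<mu>0 \<le> f \<mu>" by (rule \<mu>0(2))
        also have "f \<mu> = cmod l" using False by (simp add: f_def \<mu>_def)
        finally show False using l by simp
      qed
      then have "op_invertible (\<lambda>x. \<mu> *\<^sub>C x - P x)" by (simp add: K_def op_spectrum_def)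
      then have "op_invertible (\<lambda>x. q *\<^sub>C (\<mu> *\<^sub>C x - P x))" by (rule op_invertible_scale[OF _ False])
      then show ?thesis using T_shift[OF False, of P l] by (simp add: T_def \<mu>_def)
    qed
  qed
  have "onorm S = 1 / f \<mu>0" using leq geq[OF \<mu>0(1)] by simp
  then show ?thesis using \<mu>0(1) geq fpos unfolding resS K_def f_def by blast
qed


lemma hyp_facts:
  fixes P :: "'a::chilbert_space \<Rightarrow> 'a"
  assumes "thm_hyp P \<gamma>"
  shows "0 \<le> \<gamma>" "\<gamma> < pi/2" "bounded_clinear P" "normal_op P" "\<not> op_invertible P"
    "op_spectrum P \<subseteq> closure (sector \<gamma>) \<union> {\<mu>. Im \<mu> = 0 \<and> 0 \<le> Re \<mu>}"
proof -
  show "0 \<le> \<gamma>" "\<gamma> < pi/2" "normal_op P" "\<not> op_invertible P"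
    using assms pi_gt_zero by (auto simp: thm_hyp_def)
  then show P: "bounded_clinear P" by (simp add: normal_op_def)
  show "op_spectrum P \<subseteq> closure (sector \<gamma>) \<union> {\<mu>. Im \<mu> = 0 \<and> 0 \<le> Re \<mu>}"
    using assms nonneg_spec[OF _ P] by (auto simp: thm_hyp_def)
qed

lemma neg_sector:
  assumes "q \<in> uminus ` sector \<beta>"
  shows "\<exists>r \<psi>. 0 < r \<and> \<bar>\<psi>\<bar> < \<beta> \<and> q = - (complex_of_real r * cis \<psi>)"
proof -
  from assms obtain z where z: "z \<in> sector \<beta>" "q = - z" by blast
  then obtain \<rho> \<phi> where "\<rho> > 0" "-\<beta> < \<phi>" "\<phi> < \<beta>" "z = complex_of_real \<rho> * cis \<phi>"
    by (auto simp: sector_def)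
  then show ?thesis using z by (intro exI[of _ \<rho>] exI[of _ \<phi>]) (auto simp: abs_less_iff)
qed

lemma T_inv:
  fixes P :: "'a::chilbert_space \<Rightarrow> 'a"
  assumes H: "thm_hyp P \<gamma>" and q: "q \<in> uminus ` sector (pi - \<gamma>) \<or> cmod q * onorm P < 1"
  shows "op_invertible (\<lambda>x. x - q *\<^sub>C P x)"
  using q
proof
  assume "cmod q * onorm P < 1"
  have P: "bounded_clinear P" by (rule hyp_facts(3)[OF H])
  have "onorm (\<lambda>x. q *\<^sub>C P x) * onorm (\<lambda>x::'a. x) \<le> cmod q * onorm P * 1"
    by (rule mult_mono[OF onorm_scaleC_le[OF bcl_bl[OF P]] onorm_id_le])
       (use onorm_pos_le[OF bcl_bl[OF P]] onorm_pos_le[OF bounded_linear_ident] in simp_all)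
  also have "\<dots> < 1" using \<open>cmod q * onorm P < 1\<close> by simp
  finally show ?thesis by (rule perturb_inv[OF inv_pair_id bcl_scaleC[OF P]])
next
  assume "q \<in> uminus ` sector (pi - \<gamma>)"
  then obtain r \<psi> where r: "0 < r" and psi: "\<bar>\<psi>\<bar> < pi - \<gamma>" and qe: "q = - (complex_of_real r * cis \<psi>)"
    using neg_sector by blast
  have g: "0 \<le> \<gamma>" "\<gamma> < pi/2" using hyp_facts[OF H] by auto
  define \<delta> where "\<delta> = min (pi - \<gamma> - \<bar>\<psi>\<bar>) (pi/2)"
  have d1: "0 < \<delta>" using psi by (simp add: \<delta>_def)
  have d2: "\<delta> \<le> pi/2" unfolding \<delta>_def by (rule min.cobounded2)
  note d = d1 d2
  have sd: "0 < sin \<delta>" using d by (intro sin_gt_zero) auto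
  have q0: "q \<noteq> 0" using r by (simp add: qe)
  have "1 / q \<notin> op_spectrum P"
  proof
    assume "1 / q \<in> op_spectrum P"
    then have mem: "1 / q \<in> closure (sector \<gamma>) \<union> {\<mu>. Im \<mu> = 0 \<and> 0 \<le> Re \<mu>}"
      using hyp_facts(6)[OF H] by blast
    have "\<bar>\<psi>\<bar> + \<gamma> \<le> pi - \<delta>" by (simp add: \<delta>_def)
    from sector_bound[OF d g(1) r this mem]
    have "sin \<delta> \<le> cmod (1 + complex_of_real r * cis \<psi> * (1 / q))" .
    also have "1 + complex_of_real r * cis \<psi> * (1 / q) = 1 - q * (1 / q)" by (simp add: qe)
    also have "\<dots> = 0" using q0 by simp
    finally show False using sd by simp
  qed
  then have "op_invertible (\<lambda>x. (1 / q) *\<^sub>C x - P x)" by (simp add: op_spectrum_def)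
  then have "op_invertible (\<lambda>x. q *\<^sub>C ((1 / q) *\<^sub>C x - P x))" by (rule op_invertible_scale[OF _ q0])
  moreover have "(\<lambda>x. q *\<^sub>C ((1 / q) *\<^sub>C x - P x)) = (\<lambda>x. x - q *\<^sub>C P x)"
    using T_shift[OF q0, of P 0] by simp
  ultimately show ?thesis by simp
qed

lemma bound_cd:
  assumes g: "0 \<le> \<gamma>" "\<gamma> \<le> pi/2" and cone: "cos \<gamma> * cmod \<mu> \<le> Re \<mu>" and mp: "cmod \<mu> \<le> p"
    and qp: "cmod q * p < 1 - sin \<gamma>"
  shows "cmod (1 - q * complex_of_real p) \<le> 4 * cmod (1 - q * \<mu>)"
proof (cases "p = 0")
  case True
  then show ?thesis using mp by simp
next
  case False
  then have p0: "0 < p" using mp norm_ge_zero[of \<mu>] by linarith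
  define \<nu> where "\<nu> = \<mu> / complex_of_real p"
  define w where "w = q * complex_of_real p"
  have "cos \<gamma> * cmod \<nu> \<le> Re \<nu>" using cone p0 by (simp add: \<nu>_def norm_divide field_simps)
  moreover have "cmod \<nu> \<le> 1" using mp p0 by (simp add: \<nu>_def norm_divide field_simps)
  moreover have "cmod w < 1 - sin \<gamma>" using qp p0 by (simp add: w_def norm_mult)
  ultimately have ineq: "cmod (1 - w) \<le> 4 * cmod (1 - w * \<nu>)" by (rule ineq_cd[OF g])
  have e: "w * \<nu> = q * \<mu>" using p0 by (simp add: w_def \<nu>_def)
  from ineq[unfolded e] show ?thesis by (simp only: w_def)
qed

lemma recip_le:
  fixes a b c :: real
  assumes "0 < a" "0 < b" "b \<le> c * a"
  shows "1 / a \<le> c / b"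
proof -
  have "b / a \<le> c" using assms(3) pos_divide_le_eq[OF assms(1), of b c] by simp
  then show ?thesis using assms by (simp add: pos_le_divide_eq)
qed


lemma pos_one_minus:
  assumes "cmod q * p < 1" "0 \<le> p"
  shows "0 < cmod (1 - q * complex_of_real p)"
proof -
  have "1 - cmod (q * complex_of_real p) \<le> cmod (1 - q * complex_of_real p)"
    using norm_triangle_ineq2[of 1 "q * complex_of_real p"] by simp
  moreover have "cmod (q * complex_of_real p) = cmod q * p" using assms(2) by (simp add: norm_mult)
  ultimately show ?thesis using assms(1) by linarith
qed

theorem theorem3p2:
  shows "(\<forall>(P::'a::chilbert_space \<Rightarrow> 'a) \<gamma>. thm_hyp P \<gamma> \<longrightarrow>
      (\<forall>q. (q \<in> uminus ` sector (pi - \<gamma>) \<or> cmod q * onorm P < 1) \<longrightarrow>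
          op_invertible (\<lambda>x. x - q *\<^sub>C P x) \<and>
          (\<exists>\<mu>0\<in>op_spectrum P. onorm (res_op q P) = 1 / cmod (1 - q * \<mu>0) \<and>
             (\<forall>\<mu>\<in>op_spectrum P. 1 / cmod (1 - q * \<mu>) \<le> onorm (res_op q P))))
    \<and> (\<forall>\<gamma>'. \<gamma> < \<gamma>' \<and> \<gamma>' < pi/2 \<longrightarrow>
          (\<forall>q\<in>uminus ` sector (pi - \<gamma>'). onorm (res_op q P) \<le> 1 / sin (\<gamma>' - \<gamma>)))
    \<and> (selfadjoint_op P \<and> nonneg_op P \<longrightarrow>
          (\<forall>q. cmod q * onorm P < 1 \<longrightarrow>
             onorm (res_op q P) \<le> 4 / cmod (1 - q * complex_of_real (onorm P)))))
  \<and> (\<forall>r. 0 < r \<and> r < 1 \<longrightarrow> (\<exists>C. \<forall>(P::'a \<Rightarrow> 'a) \<gamma>.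
        thm_hyp P \<gamma> \<and> 0 < sin \<gamma> \<and> sin \<gamma> < 1 - r \<longrightarrow>
        (\<forall>q. cmod q * onorm P < 1 - sin \<gamma> \<longrightarrow>
           onorm (res_op q P) \<le> C / cmod (1 - q * complex_of_real (onorm P)))))"
proof (rule conjI)
  show "\<forall>(P::'a::chilbert_space \<Rightarrow> 'a) \<gamma>. thm_hyp P \<gamma> \<longrightarrow>
      (\<forall>q. (q \<in> uminus ` sector (pi - \<gamma>) \<or> cmod q * onorm P < 1) \<longrightarrow>
          op_invertible (\<lambda>x. x - q *\<^sub>C P x) \<and>
          (\<exists>\<mu>0\<in>op_spectrum P. onorm (res_op q P) = 1 / cmod (1 - q * \<mu>0) \<and>
             (\<forall>\<mu>\<in>op_spectrum P. 1 / cmod (1 - q * \<mu>) \<le> onorm (res_op q P))))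
    \<and> (\<forall>\<gamma>'. \<gamma> < \<gamma>' \<and> \<gamma>' < pi/2 \<longrightarrow>
          (\<forall>q\<in>uminus ` sector (pi - \<gamma>'). onorm (res_op q P) \<le> 1 / sin (\<gamma>' - \<gamma>)))
    \<and> (selfadjoint_op P \<and> nonneg_op P \<longrightarrow>
          (\<forall>q. cmod q * onorm P < 1 \<longrightarrow>
             onorm (res_op q P) \<le> 4 / cmod (1 - q * complex_of_real (onorm P))))"
  proof (intro allI impI)
    fix P :: "'a \<Rightarrow> 'a" and \<gamma> assume H: "thm_hyp P \<gamma>"
    note HF = hyp_facts[OF H]
    show "(\<forall>q. (q \<in> uminus ` sector (pi - \<gamma>) \<or> cmod q * onorm P < 1) \<longrightarrow>
          op_invertible (\<lambda>x. x - q *\<^sub>C P x) \<and>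
          (\<exists>\<mu>0\<in>op_spectrum P. onorm (res_op q P) = 1 / cmod (1 - q * \<mu>0) \<and>
             (\<forall>\<mu>\<in>op_spectrum P. 1 / cmod (1 - q * \<mu>) \<le> onorm (res_op q P))))
    \<and> (\<forall>\<gamma>'. \<gamma> < \<gamma>' \<and> \<gamma>' < pi/2 \<longrightarrow>
          (\<forall>q\<in>uminus ` sector (pi - \<gamma>'). onorm (res_op q P) \<le> 1 / sin (\<gamma>' - \<gamma>)))
    \<and> (selfadjoint_op P \<and> nonneg_op P \<longrightarrow>
          (\<forall>q. cmod q * onorm P < 1 \<longrightarrow>
             onorm (res_op q P) \<le> 4 / cmod (1 - q * complex_of_real (onorm P))))"
    proof (intro conjI)
      show "\<forall>q. (q \<in> uminus ` sector (pi - \<gamma>) \<or> cmod q * onorm P < 1) \<longrightarrow>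
          op_invertible (\<lambda>x. x - q *\<^sub>C P x) \<and>
          (\<exists>\<mu>0\<in>op_spectrum P. onorm (res_op q P) = 1 / cmod (1 - q * \<mu>0) \<and>
             (\<forall>\<mu>\<in>op_spectrum P. 1 / cmod (1 - q * \<mu>) \<le> onorm (res_op q P)))"
      proof (intro allI impI)
        fix q assume q: "q \<in> uminus ` sector (pi - \<gamma>) \<or> cmod q * onorm P < 1"
        have Ti: "op_invertible (\<lambda>x. x - q *\<^sub>C P x)" by (rule T_inv[OF H q])
        from part_a[OF HF(4) HF(5) Ti] Ti
        show "op_invertible (\<lambda>x. x - q *\<^sub>C P x) \<and>
          (\<exists>\<mu>0\<in>op_spectrum P. onorm (res_op q P) = 1 / cmod (1 - q * \<mu>0) \<and>
             (\<forall>\<mu>\<in>op_spectrum P. 1 / cmod (1 - q * \<mu>) \<le> onorm (res_op q P)))" by blast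
      qed
      show "\<forall>\<gamma>'. \<gamma> < \<gamma>' \<and> \<gamma>' < pi/2 \<longrightarrow>
          (\<forall>q\<in>uminus ` sector (pi - \<gamma>'). onorm (res_op q P) \<le> 1 / sin (\<gamma>' - \<gamma>))"
      proof (intro allI impI ballI)
        fix \<gamma>' q assume g': "\<gamma> < \<gamma>' \<and> \<gamma>' < pi/2" and q: "q \<in> uminus ` sector (pi - \<gamma>')"
        obtain r \<psi> where r: "0 < r" and psi: "\<bar>\<psi>\<bar> < pi - \<gamma>'" and qe: "q = - (complex_of_real r * cis \<psi>)"
          using neg_sector[OF q] by blast
        have "- q \<in> sector (pi - \<gamma>)"
          unfolding sector_def mem_Collect_eq
          by (rule exI[of _ r], rule exI[of _ \<psi>]) (use r psi g' in \<open>auto simp: qe abs_less_iff\<close>)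
        then have q2: "q \<in> uminus ` sector (pi - \<gamma>)" by (intro image_eqI[of q uminus "- q"]) auto
        have Ti: "op_invertible (\<lambda>x. x - q *\<^sub>C P x)" by (rule T_inv[OF H]) (use q2 in blast)
        obtain \<mu>0 where \<mu>0: "\<mu>0 \<in> op_spectrum P" "onorm (res_op q P) = 1 / cmod (1 - q * \<mu>0)"
          "0 < cmod (1 - q * \<mu>0)"
          using part_a[OF HF(4) HF(5) Ti] by blast
        define \<delta> where "\<delta> = \<gamma>' - \<gamma>"
        have d: "0 < \<delta>" "\<delta> \<le> pi/2" using g' HF(1) by (auto simp: \<delta>_def)
        have "\<bar>\<psi>\<bar> + \<gamma> \<le> pi - \<delta>" using psi by (simp add: \<delta>_def)
        from sector_bound[OF d HF(1) r this] \<mu>0(1) HF(6)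
        have "sin \<delta> \<le> cmod (1 + complex_of_real r * cis \<psi> * \<mu>0)" by blast
        also have "1 + complex_of_real r * cis \<psi> * \<mu>0 = 1 - q * \<mu>0" by (simp add: qe)
        finally have sb: "sin \<delta> \<le> cmod (1 - q * \<mu>0)" .
        have sd: "0 < sin \<delta>" using d by (intro sin_gt_zero) auto
        have "1 / cmod (1 - q * \<mu>0) \<le> 1 / sin \<delta>" by (rule recip_le[OF \<mu>0(3) sd]) (use sb in simp)
        then show "onorm (res_op q P) \<le> 1 / sin (\<gamma>' - \<gamma>)" using \<mu>0(2) by (simp add: \<delta>_def)
      qed
      show "selfadjoint_op P \<and> nonneg_op P \<longrightarrow>
          (\<forall>q. cmod q * onorm P < 1 \<longrightarrow>
             onorm (res_op q P) \<le> 4 / cmod (1 - q * complex_of_real (onorm P)))"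
      proof (intro allI impI)
        fix q assume sa: "selfadjoint_op P \<and> nonneg_op P" and q: "cmod q * onorm P < 1"
        have Ti: "op_invertible (\<lambda>x. x - q *\<^sub>C P x)" by (rule T_inv[OF H]) (use q in blast)
        obtain \<mu>0 where \<mu>0: "\<mu>0 \<in> op_spectrum P" "onorm (res_op q P) = 1 / cmod (1 - q * \<mu>0)"
          "0 < cmod (1 - q * \<mu>0)"
          using part_a[OF HF(4) HF(5) Ti] by blast
        have p0: "0 \<le> onorm P" by (rule onorm_pos_le[OF bcl_bl[OF HF(3)]])
        have re: "\<mu>0 \<in> {\<mu>. Im \<mu> = 0 \<and> 0 \<le> Re \<mu>}" using nonneg_spec[OF _ HF(3)] sa \<mu>0(1) by blast
        have cone: "cos 0 * cmod \<mu>0 \<le> Re \<mu>0" by (rule sector_cone) (use re in auto)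
        have mp: "cmod \<mu>0 \<le> onorm P" using spec_subset_cball[OF HF(3)] \<mu>0(1) by auto
        have "cmod (1 - q * complex_of_real (onorm P)) \<le> 4 * cmod (1 - q * \<mu>0)"
          by (rule bound_cd[OF _ _ cone mp]) (use q in auto)
        then show "onorm (res_op q P) \<le> 4 / cmod (1 - q * complex_of_real (onorm P))"
          unfolding \<mu>0(2) by (rule recip_le[OF \<mu>0(3) pos_one_minus[OF q p0]])
      qed
    qed
  qed
next
  show "\<forall>r. 0 < r \<and> r < 1 \<longrightarrow> (\<exists>C. \<forall>(P::'a \<Rightarrow> 'a) \<gamma>.
        thm_hyp P \<gamma> \<and> 0 < sin \<gamma> \<and> sin \<gamma> < 1 - r \<longrightarrow>
        (\<forall>q. cmod q * onorm P < 1 - sin \<gamma> \<longrightarrow>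
           onorm (res_op q P) \<le> C / cmod (1 - q * complex_of_real (onorm P))))"
  proof (intro allI impI exI[of _ 4])
    fix r :: real and P :: "'a \<Rightarrow> 'a" and \<gamma> q
    assume H': "thm_hyp P \<gamma> \<and> 0 < sin \<gamma> \<and> sin \<gamma> < 1 - r" and q: "cmod q * onorm P < 1 - sin \<gamma>"
    then have H: "thm_hyp P \<gamma>" and sg: "0 < sin \<gamma>" by auto
    note HF = hyp_facts[OF H]
    have q1: "cmod q * onorm P < 1" using q sg by linarith
    have Ti: "op_invertible (\<lambda>x. x - q *\<^sub>C P x)" by (rule T_inv[OF H]) (use q1 in blast)
    obtain \<mu>0 where \<mu>0: "\<mu>0 \<in> op_spectrum P" "onorm (res_op q P) = 1 / cmod (1 - q * \<mu>0)"
      "0 < cmod (1 - q * \<mu>0)"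
      using part_a[OF HF(4) HF(5) Ti] by blast
    have p0: "0 \<le> onorm P" by (rule onorm_pos_le[OF bcl_bl[OF HF(3)]])
    have cone: "cos \<gamma> * cmod \<mu>0 \<le> Re \<mu>0"
      by (rule sector_cone) (use HF(1) HF(2) HF(6) \<mu>0(1) in auto)
    have mp: "cmod \<mu>0 \<le> onorm P" using spec_subset_cball[OF HF(3)] \<mu>0(1) by auto
    have "cmod (1 - q * complex_of_real (onorm P)) \<le> 4 * cmod (1 - q * \<mu>0)"
      by (rule bound_cd[OF _ _ cone mp q]) (use HF(1) HF(2) in auto)
    then show "onorm (res_op q P) \<le> 4 / cmod (1 - q * complex_of_real (onorm P))"
      unfolding \<mu>0(2) by (rule recip_le[OF \<mu>0(3) pos_one_minus[OF q1 p0]])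
  qed
qed

end
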